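(* Let $\sigma,\tau,\bar\sigma,\bar\tau$ satisfy the Standing Hypothesis and let $m,n$ be integers with $0<m\le n$. Then $$\{\sigma,m,n,\tau\,|\,\bar\sigma,m-1,\bar\tau\}-\{\sigma,n+1,m-1,\tau\,|\,\bar\sigma,m-1,\bar\tau\} =\{\sigma,m,n,\tau\,|\,\bar\sigma,m,\bar\tau\}+\{\sigma,n+1,m-1+\tau_1,\tau\backslash\tau_1\,|\,\bar\sigma,m,\bar\tau\backslash\bar\tau_1\},$$ where the second term on the right is omitted if $t=0$.
   Context: Overlap notation: for $\alpha=(\alpha_1,\dots,\alpha_L)$ with $\alpha_i\ge1$ and $\beta=(\beta_1,\dots,\beta_{L-1})$ with $0\le\beta_i\le\min\{\alpha_i,\alpha_{i+1}\}$, $(\alpha\,|\,\beta)$ is the skew diagram $\lambda/\mu$ (boxes $(i,j)$ with $\mu_i<j\le\lambda_i$, identified up to deleting empty rows/columns) with $L$ nonempty rows, $\lambda_i-\mu_i=\alpha_i$, $\lambda_{i+1}-\mu_i=\beta_i$ (row $i$ has $\alpha_i$ boxes, rows $i,i+1$ share $\beta_i$ columns); $\{\alpha\,|\,\beta\}=s_{\lambda/\mu}$ is its skew Schur function (generating function of semistandard Young tableaux of that shape). Commas denote concatenation of sequences. Standing Hypothesis: $\sigma=(\sigma_1,\dots,\sigma_s)$, $\tau=(\tau_1,\dots,\tau_t)$ compositions, $s,t\ge0$; $\bar\sigma,\bar\tau$ sequences of non-negative integers of lengths $s,t$; $\bar\sigma_s=1$ if $s>0$; $\bar\tau_1=1$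 if $t>0$; $\bar\sigma_i\le\min\{\sigma_i,\sigma_{i+1}\}$ ($1\le i<s$), $\bar\tau_i\le\min\{\tau_i,\tau_{i-1}\}$ ($1<i\le t$). $\sigma\backslash\sigma_s$ removes the last part of $\sigma$, $\tau\backslash\tau_1$ removes the first part of $\tau$, and similarly for $\bar\sigma\backslash\bar\sigma_s$, $\bar\tau\backslash\bar\tau_1$. *)

theory Defs
  imports Main
begin

(* Rows are indexed 0..L-1 (top to bottom, English
   notation), columns by integers.  ov_right a b i is the right end lambda_i of row i;
   row i occupies the columns lambda_i - a_i + 1 .. lambda_i, and
   lambda_{i+1} = mu_i + beta_i = lambda_i - a_i + beta_i.  Translation of the diagram
   is irrelevant (identification up to deleting empty rows/columns). *)
fun ov_right :: "nat list \<Rightarrow> nat list \<Rightarrow> nat \<Rightarrow> int" where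
  "ov_right a b 0 = 0"
| "ov_right a b (Suc i) = ov_right a b i - int (a ! i) + int (b ! i)"

definition ov_cells :: "nat list \<Rightarrow> nat list \<Rightarrow> (nat \<times> int) set" where
  "ov_cells a b = {(i, j). i < length a \<and> ov_right a b i - int (a ! i) < j \<and> j \<le> ov_right a b i}"

definition ov_valid :: "nat list \<Rightarrow> nat list \<Rightarrow> bool" where
  "ov_valid a b \<longleftrightarrow> length b + 1 = length a \<and>
     (\<forall>i < length b. b ! i \<le> min (a ! i) (a ! (i + 1)))"

definition ssyt :: "(nat \<times> int) set \<Rightarrow> nat \<Rightarrow> ((nat \<times> int) \<Rightarrow> nat) set" where
  "ssyt D N = {T. (\<forall>c \<in> D. T c \<in> {1..N}) \<and> (\<forall>c. c \<notin> D \<longrightarrow> T c = 0) \<and>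
     (\<forall>i j j'. (i, j) \<in> D \<and> (i, j') \<in> D \<and> j < j' \<longrightarrow> T (i, j) \<le> T (i, j')) \<and>
     (\<forall>i i' j. (i, j) \<in> D \<and> (i', j) \<in> D \<and> i < i' \<longrightarrow> T (i, j) < T (i', j))}"

definition skew_schur :: "(nat \<times> int) set \<Rightarrow> nat \<Rightarrow> (nat \<Rightarrow> 'r::comm_ring_1) \<Rightarrow> 'r" where
  "skew_schur D N x = (\<Sum>T \<in> ssyt D N. \<Prod>c \<in> D. x (T c))"

(* {alpha | beta}; by convention 0 if the overlap data is not admissible *)
definition ov_schur :: "nat list \<Rightarrow> nat list \<Rightarrow> nat \<Rightarrow> (nat \<Rightarrow> 'r::comm_ring_1) \<Rightarrow> 'r" where
  "ov_schur a b N x = (if ov_valid a b then skew_schur (ov_cells a b) N x else 0)"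

definition standing_hyp :: "nat list \<Rightarrow> nat list \<Rightarrow> nat list \<Rightarrow> nat list \<Rightarrow> bool" where
  "standing_hyp \<sigma> \<sigma>b \<tau> \<tau>b \<longleftrightarrow>
     (\<forall>k \<in> set \<sigma>. 1 \<le> k) \<and> (\<forall>k \<in> set \<tau>. 1 \<le> k) \<and>
     length \<sigma>b = length \<sigma> \<and> length \<tau>b = length \<tau> \<and>
     (\<sigma> \<noteq> [] \<longrightarrow> last \<sigma>b = 1) \<and> (\<tau> \<noteq> [] \<longrightarrow> hd \<tau>b = 1) \<and>
     (\<forall>i. i + 1 < length \<sigma> \<longrightarrow> \<sigma>b ! i \<le> min (\<sigma> ! i) (\<sigma> ! (i + 1))) \<and>
     (\<forall>i. 0 < i \<and> i < length \<tau> \<longrightarrow> \<tau>b ! i \<le> min (\<tau> ! i) (\<tau> ! (i - 1)))"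

end

theory Submission
  imports Defs "HOL-Library.Multiset"
begin

definition cnt :: "nat multiset \<Rightarrow> nat \<Rightarrow> nat" where
  "cnt M x = size (filter_mset (\<lambda>y. y \<le> x) M)"

lemma cnt_plus[simp]: "cnt (P + Q) x = cnt P x + cnt Q x"
  by (simp add: cnt_def)

lemma cnt_empty[simp]: "cnt {#} x = 0"
  by (simp add: cnt_def)

lemma cnt_le_size: "cnt M x \<le> size M"
  by (simp add: cnt_def size_filter_mset_lesseq)

lemma cnt_mono: "x \<le> y \<Longrightarrow> cnt M x \<le> cnt M y"
  unfolding cnt_def by (rule size_mset_mono) (rule filter_mset_mono_strong, auto)

lemma cnt_Suc: "cnt M (Suc x) = cnt M x + count M (Suc x)"
proof -
  have "filter_mset (\<lambda>y. y \<le> Suc x) M = filter_mset (\<lambda>y. y \<le> x) M + filter_mset (\<lambda>y. y = Suc x) M"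
    by (induction M) auto
  moreover have "size (filter_mset (\<lambda>y. y = Suc x) M) = count M (Suc x)"
    by (simp add: filter_eq_replicate_mset)
  ultimately show ?thesis by (simp add: cnt_def)
qed

lemma cnt_0: "cnt M 0 = count M 0"
proof -
  have "filter_mset (\<lambda>y. y \<le> 0) M = filter_mset (\<lambda>y. y = 0) M" by (rule filter_mset_cong) auto
  then show ?thesis by (simp add: cnt_def filter_eq_replicate_mset)
qed

lemma cnt_full: "(\<forall>y\<in>#M. y \<le> x) \<Longrightarrow> cnt M x = size M"
proof -
  assume "\<forall>y\<in>#M. y \<le> x"
  then have "filter_mset (\<lambda>y. y \<le> x) M = M" by (simp add: filter_mset_eq_conv)
  then show ?thesis by (simp add: cnt_def)
qed

lemma cnt_diff: "Q \<subseteq># P \<Longrightarrow> cnt (P - Q) x = cnt P x - cnt Q x"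
proof -
  assume "Q \<subseteq># P"
  then obtain R where "P = Q + R" by (metis subset_mset.add_diff_inverse)
  then show ?thesis by simp
qed

lemma mset_eq_cnt: "(\<And>x. cnt P x = cnt Q x) \<Longrightarrow> P = Q"
proof (rule multiset_eqI)
  fix a assume h: "\<And>x. cnt P x = cnt Q x"
  show "count P a = count Q a"
  proof (cases a)
    case 0 then show ?thesis using h[of 0] by (simp add: cnt_0)
  next
    case (Suc b) then show ?thesis using h[of b] h[of "Suc b"] by (simp add: cnt_Suc)
  qed
qed

lemma cnt_rep: "cnt (replicate_mset k a) y = (if a \<le> y then k else 0)"
  by (induction k) (auto simp: cnt_def)

definition mk :: "(nat \<Rightarrow> nat) \<Rightarrow> nat \<Rightarrow> nat multiset" where
  "mk f N = (\<Sum>x<N. replicate_mset (f (Suc x) - f x) (Suc x))"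

lemma cnt_mk: "mono f \<Longrightarrow> f 0 = 0 \<Longrightarrow> cnt (mk f N) y = f (min y N)"
proof (induction N)
  case 0 then show ?case by (simp add: mk_def)
next
  case (Suc N)
  have "cnt (replicate_mset (f (Suc N) - f N) (Suc N)) y = (if Suc N \<le> y then f (Suc N) - f N else 0)"
    by (simp add: cnt_rep)
  moreover have "f N \<le> f (Suc N)" using Suc.prems by (simp add: mono_def)
  moreover have "f (min y N) \<le> f N" using Suc.prems by (simp add: mono_def)
  ultimately show ?case using Suc by (auto simp: mk_def min_def)
qed

lemma set_mk: "set_mset (mk f N) \<subseteq> {1..N}"
  unfolding mk_def by (induction N) (auto split: if_splits)

lemma cnt_ge_N: "set_mset M \<subseteq> {1..N} \<Longrightarrow> N \<le> x \<Longrightarrow> cnt M x = size M"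
  by (rule cnt_full) auto

lemma cnt_zero: "set_mset M \<subseteq> {1..N} \<Longrightarrow> cnt M 0 = 0"
  by (auto simp: cnt_0 count_eq_zero_iff)

definition adj :: "nat \<Rightarrow> nat multiset \<Rightarrow> nat multiset \<Rightarrow> bool" where
  "adj c ta bo \<longleftrightarrow> (\<forall>x. cnt bo (Suc x) + c \<le> cnt ta x + size bo)"

fun Mf :: "nat multiset \<Rightarrow> nat multiset \<Rightarrow> nat \<Rightarrow> nat" where
  "Mf a b 0 = 0"
| "Mf a b (Suc z) = max (Mf a b z) (cnt b (Suc z) - cnt a z)"

function Lf :: "nat \<Rightarrow> nat \<Rightarrow> nat multiset \<Rightarrow> nat multiset \<Rightarrow> nat \<Rightarrow> nat" where
  "Lf K N A B x = (if N \<le> x then K else min (cnt A x - cnt B (Suc x)) (Lf K N A B (Suc x)))"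
  by auto
termination by (relation "measure (\<lambda>(K,N,A,B,x). N - x)") auto

declare Lf.simps[simp del]

lemma Mf_mono: "mono (Mf a b)"
  unfolding mono_iff_le_Suc by simp

lemma Mf_ge: "cnt b (Suc z) - cnt a z \<le> Mf a b (Suc z)"
  by simp

definition phi :: "nat \<Rightarrow> nat multiset \<times> nat multiset \<Rightarrow> nat multiset \<times> nat multiset" where
  "phi N p = (let D = mk (Mf (fst p) (snd p)) N in (fst p + D, snd p - D))"

definition psi :: "nat \<Rightarrow> nat \<Rightarrow> nat multiset \<times> nat multiset \<Rightarrow> nat multiset \<times> nat multiset" where
  "psi K N p = (let E = mk (Lf K N (fst p) (snd p)) N in (fst p - E, snd p + E))"

definition Sset :: "nat \<Rightarrow> nat \<Rightarrow> nat \<Rightarrow> nat multiset \<Rightarrow> (nat multiset \<times> nat multiset) set" where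
  "Sset m n N u = {(a,b). size a = m \<and> size b = n \<and> set_mset a \<subseteq> {1..N} \<and> set_mset b \<subseteq> {1..N}
      \<and> adj 1 u a \<and> adj (m-1) a b \<and> \<not> adj m a b}"

definition Hset :: "nat \<Rightarrow> nat \<Rightarrow> nat \<Rightarrow> nat multiset \<Rightarrow> (nat multiset \<times> nat multiset) set" where
  "Hset m n N u = {(A,B). size A = n + 1 \<and> size B = m - 1 \<and> set_mset A \<subseteq> {1..N} \<and> set_mset B \<subseteq> {1..N}
      \<and> adj 1 u A \<and> adj (m-1) A B}"

locale core =
  fixes m n N :: nat
  assumes mpos: "0 < m" and mn: "m \<le> n"
begin

abbreviation "K \<equiv> Suc n - m"

lemma K_pos: "1 \<le> K" using mn by simp

context
  fixes a b u
  assumes ab: "(a,b) \<in> Sset m n N u"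
begin

lemma sz: "size a = m" "size b = n" "set_mset a \<subseteq> {1..N}" "set_mset b \<subseteq> {1..N}"
  "adj 1 u a"
  using ab by (auto simp: Sset_def)

lemma g_le_K: "cnt b (Suc x) - cnt a x \<le> K"
proof -
  have "cnt b (Suc x) + (m - 1) \<le> cnt a x + n" using ab by (auto simp: Sset_def adj_def)
  then show ?thesis using mpos by linarith
qed

lemma M_le_K: "Mf a b x \<le> K"
proof (induction x)
  case (Suc x) then show ?case using g_le_K[of x] by simp
qed simp

lemma M_N: "Mf a b N = K"
proof -
  from ab obtain x where x: "\<not> cnt b (Suc x) + m \<le> cnt a x + n"
    by (auto simp: Sset_def adj_def)
  have "x < N"
  proof (rule ccontr)
    assume "\<not> x < N"
    then have "cnt b (Suc x) = n" "cnt a x = m" using sz cnt_ge_N by auto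
    then show False using x by simp
  qed
  then have "Suc x \<le> N" by simp
  from monoD[OF Mf_mono this] have "Mf a b (Suc x) \<le> Mf a b N" .
  moreover have "K \<le> cnt b (Suc x) - cnt a x" using x by linarith
  ultimately show ?thesis using Mf_ge[of b x a] M_le_K[of N] by linarith
qed

lemma M_const: "N \<le> x \<Longrightarrow> Mf a b x = K"
proof (induction x rule: dec_induct)
  case base then show ?case by (rule M_N)
next
  case (step x)
  have "cnt b (Suc x) = n" "cnt a x = m" using sz cnt_ge_N step by auto
  then show ?case using step by simp
qed

lemma M_min: "Mf a b (min x N) = Mf a b x"
  by (cases "x \<le> N") (auto simp: min_def M_const)

lemma M5: "cnt b z - cnt a z \<le> Mf a b z"
proof (cases z)
  case 0 then show ?thesis using cnt_zero sz by simp
next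
  case (Suc w)
  have "cnt a w \<le> cnt a (Suc w)" by (rule cnt_mono) simp
  moreover have "cnt b (Suc w) - cnt a w \<le> Mf a b (Suc w)" by (rule Mf_ge)
  ultimately have "cnt b (Suc w) - cnt a (Suc w) \<le> Mf a b (Suc w)" by linarith
  then show ?thesis using Suc by simp
qed

abbreviation "DD \<equiv> mk (Mf a b) N"

lemma cntD: "cnt DD x = Mf a b x"
  by (simp add: cnt_mk Mf_mono M_min)

lemma D_sub: "DD \<subseteq># b"
proof (rule mset_subset_eqI)
  fix y
  show "count DD y \<le> count b y"
  proof (cases y)
    case 0 then show ?thesis using cntD[of 0] by (simp add: cnt_0)
  next
    case (Suc z)
    have c1: "count DD (Suc z) = Mf a b (Suc z) - Mf a b z" using cntD[of z] cntD[of "Suc z"] cnt_Suc[of DD z] by simp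
    have c2: "count b (Suc z) = cnt b (Suc z) - cnt b z" using cnt_Suc[of b z] by simp
    have "cnt b z \<le> cnt a z + Mf a b z" using M5[of z] by linarith
    moreover have "cnt b z \<le> cnt b (Suc z)" by (rule cnt_mono) simp
    ultimately show ?thesis using Suc c1 c2 by (simp add: max_def) linarith
  qed
qed

lemma phi_eq: "phi N (a,b) = (a + DD, b - DD)"
  by (simp add: phi_def Let_def)

lemma cnt_phiA: "cnt (a + DD) x = cnt a x + Mf a b x"
  by (simp add: cntD)

lemma cnt_phiB: "cnt (b - DD) x = cnt b x - Mf a b x"
  by (simp add: cnt_diff[OF D_sub] cntD)

lemma size_D: "size DD = K"
  using cntD[of N] cnt_ge_N[of "mk (Mf a b) N" N N, OF set_mk] M_N by simp

lemma phi_H: "phi N (a,b) \<in> Hset m n N u"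
proof -
  have s1: "size (a + DD) = n + 1" using size_D sz mn by simp
  have s2: "size (b - DD) = m - 1" using size_D sz mn D_sub by (simp add: size_Diff_submset)
  have st1: "set_mset (a + DD) \<subseteq> {1..N}" using sz set_mk by auto
  have st2: "set_mset (b - DD) \<subseteq> {1..N}" using sz(4) by (meson in_diffD subset_iff)
  have u: "adj 1 u (a + DD)" unfolding adj_def
  proof
    fix x
    have "cnt a (Suc x) + 1 \<le> cnt u x + size a" using sz(5) by (simp add: adj_def)
    then show "cnt (a + DD) (Suc x) + 1 \<le> cnt u x + size (a + DD)"
      using cnt_phiA[of "Suc x"] M_le_K[of "Suc x"] s1 sz(1) mn by linarith
  qed
  have ad: "adj (m-1) (a + DD) (b - DD)"
    unfolding adj_def s2
  proof
    fix x
    show "cnt (b - DD) (Suc x) + (m - 1) \<le> cnt (a + DD) x + (m - 1)"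
      using cnt_phiA[of x] cnt_phiB[of "Suc x"] Mf_ge[of b x a] by linarith
  qed
  show ?thesis using s1 s2 st1 st2 u ad by (simp add: phi_eq Hset_def)
qed

end

context
  fixes A B u
  assumes AB: "(A,B) \<in> Hset m n N u"
begin

lemma hz: "size A = n + 1" "size B = m - 1" "set_mset A \<subseteq> {1..N}" "set_mset B \<subseteq> {1..N}"
  "adj 1 u A"
  using AB by (auto simp: Hset_def)

lemma ballot: "cnt B (Suc x) \<le> cnt A x"
  using AB by (auto simp: Hset_def adj_def)

abbreviation "LL \<equiv> Lf K N A B"

lemma L_ge_N: "N \<le> x \<Longrightarrow> LL x = K"
  by (simp add: Lf.simps)

lemma L_rec: "LL x = min (cnt A x - cnt B (Suc x)) (LL (Suc x))"
proof (cases "N \<le> x")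
  case True
  then have "cnt A x = n + 1" "cnt B (Suc x) = m - 1" using hz cnt_ge_N by auto
  then show ?thesis using True L_ge_N[of x] L_ge_N[of "Suc x"] mn by simp
next
  case False then show ?thesis by (simp add: Lf.simps[of _ _ _ _ x])
qed

lemma L_mono: "mono LL"
  unfolding mono_iff_le_Suc by (metis L_rec min.cobounded2)

lemma L_le_P: "LL x \<le> cnt A x - cnt B (Suc x)"
  by (metis L_rec min.cobounded1)

lemma L_le_K: "LL x \<le> K"
proof -
  have "LL x \<le> LL (max x N)" using L_mono by (simp add: mono_def)
  then show ?thesis using L_ge_N[of "max x N"] by simp
qed

lemma L_0: "LL 0 = 0"
  using L_le_P[of 0] cnt_zero[OF hz(3)] by simp

lemma L_min: "LL (min x N) = LL x"
  by (cases "x \<le> N") (auto simp: min_def L_ge_N)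

lemma L_full_aux: "cnt A y = n + 1 \<Longrightarrow> y \<le> x \<Longrightarrow> LL x = K"
proof (induction "N - x" arbitrary: x)
  case 0 then show ?case by (simp add: L_ge_N)
next
  case (Suc d)
  have "cnt A y \<le> cnt A x" using Suc.prems(2) by (rule cnt_mono)
  then have "cnt A x = n + 1" using Suc.prems hz cnt_le_size[of A x] by simp
  moreover have "cnt B (Suc x) \<le> m - 1" using hz cnt_le_size[of B] by metis
  moreover have "LL (Suc x) = K" using Suc by simp
  ultimately show ?case using L_rec[of x] mn by simp
qed

lemma ca_bound: "cnt A x \<le> n \<Longrightarrow> cnt A x - LL x \<le> m - 1"
proof (induction "N - x" arbitrary: x)
  case 0 then have "cnt A x = n + 1" using hz cnt_ge_N by simp
  then show ?case using 0 by simp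
next
  case (Suc d)
  have Bb: "cnt B (Suc x) \<le> m - 1" using hz cnt_le_size[of B] by metis
  show ?case
  proof (cases "LL x = LL (Suc x)")
    case False
    then have "LL x = cnt A x - cnt B (Suc x)" using L_rec[of x] by (simp add: min_def split: if_splits)
    then show ?thesis using Bb ballot[of x] by linarith
  next
    case True
    have m1: "cnt A x \<le> cnt A (Suc x)" by (rule cnt_mono) simp
    show ?thesis
    proof (cases "cnt A (Suc x) \<le> n")
      case True
      then have "cnt A (Suc x) - LL (Suc x) \<le> m - 1" using Suc by simp
      then show ?thesis using \<open>LL x = LL (Suc x)\<close> m1 by linarith
    next
      case False
      then have "cnt A (Suc x) = n + 1" using hz cnt_le_size[of A "Suc x"] by simp
      then have "LL (Suc x) = K" using L_full_aux by simp
      then show ?thesis using \<open>LL x = LL (Suc x)\<close> Suc.prems mn by simp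
    qed
  qed
qed

abbreviation "EE \<equiv> mk LL N"

lemma cntE: "cnt EE x = LL x"
  by (simp add: cnt_mk L_mono L_0 L_min)

lemma E_sub: "EE \<subseteq># A"
proof (rule mset_subset_eqI)
  fix y
  show "count EE y \<le> count A y"
  proof (cases y)
    case 0 then show ?thesis using cntE[of 0] L_0 by (simp add: cnt_0)
  next
    case (Suc z)
    have "cnt EE (Suc z) = cnt EE z + count EE (Suc z)" by (rule cnt_Suc)
    then have c1: "count EE (Suc z) = LL (Suc z) - LL z" using cntE[of z] cntE[of "Suc z"] by linarith
    have c2: "count A (Suc z) = cnt A (Suc z) - cnt A z" using cnt_Suc[of A z] by simp
    have r: "LL z = min (cnt A z - cnt B (Suc z)) (LL (Suc z))" by (rule L_rec)
    have p1: "LL (Suc z) \<le> cnt A (Suc z) - cnt B (Suc (Suc z))" by (rule L_le_P)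
    have m1: "cnt B (Suc z) \<le> cnt B (Suc (Suc z))" by (rule cnt_mono) simp
    have m2: "cnt A z \<le> cnt A (Suc z)" by (rule cnt_mono) simp
    have b1: "cnt B (Suc z) \<le> cnt A z" by (rule ballot)
    have b2: "cnt B (Suc (Suc z)) \<le> cnt A (Suc z)" by (rule ballot)
    show ?thesis using Suc c1 c2 r p1 m1 m2 b1 b2 by (simp add: min_def split: if_splits) linarith?
  qed
qed

lemma psi_eq: "psi K N (A,B) = (A - EE, B + EE)"
  by (simp add: psi_def Let_def)

lemma cnt_psia: "cnt (A - EE) x = cnt A x - LL x"
  by (simp add: cnt_diff[OF E_sub] cntE)

lemma cnt_psib: "cnt (B + EE) x = cnt B x + LL x"
  by (simp add: cntE)

lemma L_le_cA: "LL x \<le> cnt A x"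
  using L_le_P[of x] by linarith

lemma M_psi: "Mf (A - EE) (B + EE) x = LL x"
proof (induction x)
  case 0 then show ?case using L_0 by simp
next
  case (Suc x)
  have r: "LL x = min (cnt A x - cnt B (Suc x)) (LL (Suc x))" by (rule L_rec)
  have b1: "cnt B (Suc x) \<le> cnt A x" by (rule ballot)
  have "Mf (A - EE) (B + EE) (Suc x) = max (LL x) ((cnt B (Suc x) + LL (Suc x)) - (cnt A x - LL x))"
    using Suc by (simp add: cnt_psia cnt_psib cntE)
  also have "\<dots> = LL (Suc x)"
    using r b1 L_le_cA[of x] by (simp add: min_def max_def split: if_splits) linarith?
  finally show ?case .
qed

lemma size_E: "size EE = K"
  using cntE[of N] cnt_ge_N[of "mk LL N" N N, OF set_mk] L_ge_N[of N] by simp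


lemma psi_S: "psi K N (A,B) \<in> Sset m n N u"
proof -
  have s1: "size (A - EE) = m" using size_E hz mn E_sub by (simp add: size_Diff_submset)
  have s2: "size (B + EE) = n" using size_E hz mn mpos by simp
  have st1: "set_mset (A - EE) \<subseteq> {1..N}" using hz(3) by (meson in_diffD subset_iff)
  have st2: "set_mset (B + EE) \<subseteq> {1..N}" using hz set_mk by auto
  have u: "adj 1 u (A - EE)" unfolding adj_def
  proof
    fix x
    have h: "cnt A (Suc x) + 1 \<le> cnt u x + (n + 1)" using hz(5) hz(1) by (simp add: adj_def)
    show "cnt (A - EE) (Suc x) + 1 \<le> cnt u x + size (A - EE)"
    proof (cases "cnt u x = 0")
      case True
      then have "cnt A (Suc x) \<le> n" using h by simp
      then show ?thesis using ca_bound[of "Suc x"] cnt_psia[of "Suc x"] s1 True mpos by simp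
    next
      case False
      then show ?thesis using cnt_le_size[of "A - EE" "Suc x"] s1 by simp
    qed
  qed
  have ad: "adj (m-1) (A - EE) (B + EE)"
    unfolding adj_def s2
  proof
    fix x
    have "LL x \<le> cnt A x - cnt B (Suc x)" by (rule L_le_P)
    moreover have "LL (Suc x) \<le> K" by (rule L_le_K)
    moreover have "cnt B (Suc x) \<le> cnt A x" by (rule ballot)
    ultimately show "cnt (B + EE) (Suc x) + (m - 1) \<le> cnt (A - EE) x + n"
      using cnt_psia[of x] cnt_psib[of "Suc x"] mn mpos by linarith
  qed
  have nad: "\<not> adj m (A - EE) (B + EE)"
  proof
    assume h: "adj m (A - EE) (B + EE)"
    have "Mf (A - EE) (B + EE) x \<le> K - 1" for x
    proof (induction x)
      case (Suc x)
      have "cnt (B + EE) (Suc x) + m \<le> cnt (A - EE) x + n" using h s2 by (simp add: adj_def)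
      then show ?case using Suc mn by simp
    qed simp
    then have "LL N \<le> K - 1" using M_psi by metis
    then show False using L_ge_N[of N] K_pos by simp
  qed
  show ?thesis using s1 s2 st1 st2 u ad nad by (simp add: psi_eq Sset_def)
qed

lemma phi_psi: "phi N (psi K N (A,B)) = (A,B)"
proof -
  have "mk (Mf (A - EE) (B + EE)) N = EE" using M_psi by presburger
  then show ?thesis using E_sub by (simp add: psi_eq phi_def Let_def subset_mset.diff_add)
qed

end

lemma LM_phi:
  assumes ab: "(a,b) \<in> Sset m n N u"
  shows "Lf K N (a + mk (Mf a b) N) (b - mk (Mf a b) N) x = Mf a b x"
proof -
  define A where "A = a + mk (Mf a b) N"
  define B where "B = b - mk (Mf a b) N"
  have ph: "phi N (a,b) = (A,B)" using phi_eq[OF ab] by (simp add: A_def B_def)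
  have H: "(A,B) \<in> Hset m n N u" using phi_H[OF ab] ph by simp
  have cA: "cnt A x = cnt a x + Mf a b x" for x using cnt_phiA[OF ab] A_def by simp
  have cB: "cnt B x = cnt b x - Mf a b x" for x using cnt_phiB[OF ab] B_def by simp
  have LM: "Lf K N A B x = Mf a b x" for x
  proof (induction "N - x" arbitrary: x)
    case 0 then show ?case using L_ge_N[OF H, of x] M_const[OF ab, of x] by simp
  next
    case (Suc d)
    then have IH: "Lf K N A B (Suc x) = Mf a b (Suc x)" by simp
    have r: "Lf K N A B x = min (cnt A x - cnt B (Suc x)) (Lf K N A B (Suc x))" by (rule L_rec[OF H])
    have g: "cnt b (Suc x) - Mf a b (Suc x) \<le> cnt a x + Mf a b x" using Mf_ge[of b x a] by linarith
    have M5': "Mf a b (Suc x) \<le> cnt b (Suc x)"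
    proof -
      have "cnt (b - mk (Mf a b) N) (Suc x) = cnt b (Suc x) - cnt (mk (Mf a b) N) (Suc x)"
        using cnt_diff[OF D_sub[OF ab]] by simp
      moreover have "cnt (mk (Mf a b) N) (Suc x) \<le> cnt b (Suc x)"
        using D_sub[OF ab] by (metis cnt_diff cnt_plus le_add1 subset_mset.add_diff_inverse)
      ultimately show ?thesis using cntD[OF ab] by simp
    qed
    show ?case
    proof (cases "cnt b (Suc x) - cnt a x \<le> Mf a b x")
      case True
      then have e: "Mf a b (Suc x) = Mf a b x" by simp
      have "Mf a b x \<le> cnt A x - cnt B (Suc x)" using cA[of x] cB[of "Suc x"] True e by arith
      then show ?thesis using r IH e by simp
    next
      case False
      then have e: "Mf a b (Suc x) = cnt b (Suc x) - cnt a x" by simp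
      have "cnt B (Suc x) = cnt a x" using cB[of "Suc x"] e False by arith
      then have "cnt A x - cnt B (Suc x) = Mf a b x" using cA by simp
      then show ?thesis using r IH e False by simp
    qed
  qed
  then show ?thesis by (simp add: A_def B_def)
qed

lemma psi_phi:
  assumes ab: "(a,b) \<in> Sset m n N u"
  shows "psi K N (phi N (a,b)) = (a,b)"
proof -
  have "mk (Lf K N (a + mk (Mf a b) N) (b - mk (Mf a b) N)) N = mk (Mf a b) N"
    using LM_phi[OF ab] by presburger
  then show ?thesis using D_sub[OF ab] by (simp add: psi_def phi_def Let_def subset_mset.diff_add)
qed

lemma phi_bij: "bij_betw (phi N) (Sset m n N u) (Hset m n N u)"
  by (rule bij_betw_byWitness[where f'="psi K N"]) (auto simp: psi_phi phi_psi phi_H psi_S)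

lemma phi_sum: "(a,b) \<in> Sset m n N u \<Longrightarrow> fst (phi N (a,b)) + snd (phi N (a,b)) = a + b"
  using D_sub by (simp add: phi_def Let_def)

lemma L_lower:
  assumes H: "(A,B) \<in> Hset m n N u" and h: "\<And>z. x \<le> z \<Longrightarrow> 1 \<le> cnt A z - cnt B (Suc z)"
  shows "1 \<le> Lf K N A B x"
  using h
proof (induction "N - x" arbitrary: x)
  case 0 then show ?case using L_ge_N[OF H, of x] K_pos by simp
next
  case (Suc d)
  have "1 \<le> Lf K N A B (Suc x)" using Suc by simp
  then show ?case using L_rec[OF H, of x] Suc.prems[of x] by simp
qed

definition Gset :: "nat multiset \<Rightarrow> nat multiset \<Rightarrow> (nat multiset \<times> nat multiset) set" where
  "Gset T u = {(A,C). size A = n + 1 \<and> size C = m - 1 \<and> set_mset A \<subseteq> {1..N} \<and> set_mset C \<subseteq> {1..N}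
      \<and> adj 1 u A \<and> (\<forall>c\<in>#C. \<forall>z\<in>#T. z \<le> c) \<and> adj m A (T + C)}"

lemma cnt_pos_ex: "1 \<le> cnt C y \<Longrightarrow> \<exists>c\<in>#C. c \<le> y"
proof -
  assume "1 \<le> cnt C y"
  moreover have "filter_mset (\<lambda>w. w \<le> y) C = {#} \<Longrightarrow> cnt C y = 0" by (simp add: cnt_def)
  ultimately have "filter_mset (\<lambda>w. w \<le> y) C \<noteq> {#}" by auto
  then obtain c where "c \<in># filter_mset (\<lambda>w. w \<le> y) C" by (meson multiset_nonemptyE)
  then show ?thesis by auto
qed

lemma full_le: "cnt T y = size T \<Longrightarrow> z \<in># T \<Longrightarrow> z \<le> y"
proof -
  assume h: "cnt T y = size T" "z \<in># T"
  have "filter_mset (\<lambda>w. w \<le> y) T = T"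
  proof (rule ccontr)
    assume "filter_mset (\<lambda>w. w \<le> y) T \<noteq> T"
    then have "filter_mset (\<lambda>w. w \<le> y) T \<subset># T"
      using multiset_filter_subset[of "\<lambda>w. w \<le> y" T] by (simp add: subset_mset.le_neq_trans)
    then have "size (filter_mset (\<lambda>w. w \<le> y) T) < size T" by (rule mset_subset_size)
    then show False using h(1) by (simp add: cnt_def)
  qed
  then have "z \<in># filter_mset (\<lambda>w. w \<le> y) T" using h(2) by simp
  then show ?thesis by simp
qed

lemma above_full:
  assumes "\<forall>c\<in>#C. \<forall>z\<in>#T. z \<le> c" "1 \<le> cnt C y"
  shows "cnt T y = size T"
proof -
  obtain c where "c \<in># C" "c \<le> y" using cnt_pos_ex[OF assms(2)] by blast
  then have "\<forall>z\<in>#T. z \<le> y" using assms(1) by fastforce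
  then show ?thesis by (rule cnt_full)
qed

lemma full_above:
  assumes "\<And>y. 1 \<le> cnt C y \<Longrightarrow> cnt T y = size T"
  shows "\<forall>c\<in>#C. \<forall>z\<in>#T. z \<le> c"
proof (intro ballI)
  fix c z assume "c \<in># C" "z \<in># T"
  have "1 \<le> cnt C c"
  proof -
    have "{#c#} \<subseteq># filter_mset (\<lambda>w. w \<le> c) C" using \<open>c \<in># C\<close> by simp
    then show ?thesis unfolding cnt_def by (metis size_mset_mono size_single)
  qed
  then show "z \<le> c" using assms full_le \<open>z \<in># T\<close> by blast
qed

lemma adj1_iff: "adj 1 X T \<longleftrightarrow> (\<forall>x. cnt T (Suc x) = size T \<longrightarrow> 1 \<le> cnt X x)"
proof
  assume h: "adj 1 X T"
  show "\<forall>x. cnt T (Suc x) = size T \<longrightarrow> 1 \<le> cnt X x"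
  proof (intro allI impI)
    fix x assume "cnt T (Suc x) = size T"
    moreover have "cnt T (Suc x) + 1 \<le> cnt X x + size T" using h by (simp add: adj_def)
    ultimately show "1 \<le> cnt X x" by simp
  qed
next
  assume h: "\<forall>x. cnt T (Suc x) = size T \<longrightarrow> 1 \<le> cnt X x"
  show "adj 1 X T" unfolding adj_def
  proof
    fix x
    have c: "cnt T (Suc x) \<le> size T" by (rule cnt_le_size)
    show "cnt T (Suc x) + 1 \<le> cnt X x + size T"
    proof (cases "cnt T (Suc x) = size T")
      case True then show ?thesis using h by simp
    next
      case False then show ?thesis using c by simp
    qed
  qed
qed

lemma G_sub_H: "Gset T u \<subseteq> Hset m n N u"
proof
  fix p assume "p \<in> Gset T u"
  then obtain A C where p: "p = (A,C)" and g: "size A = n + 1" "size C = m - 1" "set_mset A \<subseteq> {1..N}"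
    "set_mset C \<subseteq> {1..N}" "adj 1 u A" "\<forall>c\<in>#C. \<forall>z\<in>#T. z \<le> c" "adj m A (T + C)"
    by (auto simp: Gset_def)
  have "adj (m-1) A C"
    unfolding adj_def
  proof
    fix x
    have h: "cnt T (Suc x) + cnt C (Suc x) + m \<le> cnt A x + (size T + (m - 1))"
      using g(7) g(2) by (simp add: adj_def)
    show "cnt C (Suc x) + (m - 1) \<le> cnt A x + size C"
    proof (cases "1 \<le> cnt C (Suc x)")
      case True
      then have "cnt T (Suc x) = size T" using above_full g(6) by blast
      then show ?thesis using h g(2) mpos by linarith
    next
      case False then show ?thesis using g(2) by simp
    qed
  qed
  then show "p \<in> Hset m n N u" using g p by (simp add: Hset_def)
qed

lemma G_disj:
  assumes T: "T \<noteq> {#}" "set_mset T \<subseteq> {1..N}"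
    and h: "adj 1 B T" "(A,B) \<in> Gset T u"
  shows False
proof -
  have g: "\<forall>c\<in>#B. \<forall>z\<in>#T. z \<le> c" using h(2) by (simp add: Gset_def)
  have step: "cnt T (Suc x) = size T \<Longrightarrow> cnt T x = size T" for x
    using h(1) above_full[OF g] unfolding adj1_iff by auto
  have "cnt T (N - d) = size T" for d
  proof (induction d)
    case 0 then show ?case using cnt_ge_N[OF T(2)] by simp
  next
    case (Suc d)
    show ?case
    proof (cases "N - d = 0")
      case True then show ?thesis using Suc by simp
    next
      case False then have "N - d = Suc (N - Suc d)" by simp
      then show ?thesis using Suc step by metis
    qed
  qed
  then have "cnt T 0 = size T" by (metis diff_self_eq_0)
  then show False using cnt_zero[OF T(2)] T(1) by simp
qed

lemma G_iff:
  assumes ab: "(a,b) \<in> Sset m n N u"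
  shows "adj 1 b T \<longleftrightarrow> adj 1 (snd (phi N (a,b))) T \<or> phi N (a,b) \<in> Gset T u"
proof -
  define A where "A = a + mk (Mf a b) N"
  define B where "B = b - mk (Mf a b) N"
  have ph: "phi N (a,b) = (A,B)" using phi_eq[OF ab] by (simp add: A_def B_def)
  have H: "(A,B) \<in> Hset m n N u" using phi_H[OF ab] ph by simp
  have cA: "cnt A x = cnt a x + Mf a b x" for x using cnt_phiA[OF ab] A_def by simp
  have cB: "cnt B x = cnt b x - Mf a b x" for x using cnt_phiB[OF ab] B_def by simp
  have Mb: "Mf a b x \<le> cnt b x" for x
  proof -
    have "cnt (mk (Mf a b) N) x \<le> cnt b x"
      using D_sub[OF ab] by (metis cnt_diff cnt_plus le_add1 subset_mset.add_diff_inverse)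
    then show ?thesis using cntD[OF ab] by simp
  qed
  have LM: "Lf K N A B x = Mf a b x" for x using LM_phi[OF ab] A_def B_def by simp
  have Hs: "size A = n + 1" "size B = m - 1" "set_mset A \<subseteq> {1..N}" "set_mset B \<subseteq> {1..N}" "adj 1 u A"
    using H by (auto simp: Hset_def)
  show ?thesis
  proof
    assume adjb: "adj 1 b T"
    show "adj 1 (snd (phi N (a,b))) T \<or> phi N (a,b) \<in> Gset T u"
    proof (cases "adj 1 B T")
      case True then show ?thesis using ph by simp
    next
      case False
      then obtain x0 where x0: "cnt T (Suc x0) = size T" "cnt B x0 = 0" unfolding adj1_iff by auto
      have fb: "cnt T (Suc x) = size T \<Longrightarrow> 1 \<le> cnt b x" for x using adjb unfolding adj1_iff by auto
      have i: "1 \<le> cnt B y \<Longrightarrow> cnt T y = size T" for y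
      proof -
        assume "1 \<le> cnt B y"
        then have "\<not> y \<le> x0" using x0(2) cnt_mono[of y x0 B] by auto
        then have "Suc x0 \<le> y" by simp
        then have "cnt T (Suc x0) \<le> cnt T y" by (rule cnt_mono)
        then show "cnt T y = size T" using x0(1) cnt_le_size[of T y] by simp
      qed
      have M1: "1 \<le> Mf a b x" if "cnt T (Suc x) = size T" for x
      proof (cases "cnt B x = 0")
        case True then show ?thesis using fb[OF that] cB[of x] by simp
      next
        case False
        then have "\<not> x \<le> x0" using x0(2) cnt_mono[of x x0 B] by auto
        moreover have "1 \<le> Mf a b x0" using fb[OF x0(1)] cB[of x0] x0(2) by simp
        ultimately show ?thesis using Mf_mono by (meson monoD nat_le_linear order_trans)
      qed
      have ii: "adj m A (T + B)"
        unfolding adj_def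
      proof
        fix x
        show "cnt (T + B) (Suc x) + m \<le> cnt A x + size (T + B)"
        proof (cases "cnt T (Suc x) = size T")
          case True
          have "cnt b (Suc x) - cnt a x \<le> Mf a b (Suc x)" by (rule Mf_ge)
          then have "cnt B (Suc x) + 1 \<le> cnt A x" using cB[of "Suc x"] cA[of x] M1[OF True] by linarith
          then show ?thesis using True Hs(2) mpos by simp
        next
          case False
          then have "cnt B (Suc x) = 0" using i by (metis less_one not_le)
          moreover have "cnt T (Suc x) < size T" using False cnt_le_size[of T] by (metis le_neq_implies_less)
          ultimately show ?thesis using Hs(2) mpos by simp
        qed
      qed
      have "(A,B) \<in> Gset T u" using Hs ii full_above[of B T] i by (simp add: Gset_def)
      then show ?thesis using ph by simp
    qed
  next
    assume "adj 1 (snd (phi N (a,b))) T \<or> phi N (a,b) \<in> Gset T u"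
    then consider (F) "adj 1 B T" | (G) "(A,B) \<in> Gset T u" using ph by auto
    then show "adj 1 b T"
    proof cases
      case F then show ?thesis using cB unfolding adj1_iff by (metis diff_le_self order_trans)
    next
      case G
      then have g: "\<forall>c\<in>#B. \<forall>z\<in>#T. z \<le> c" "adj m A (T + B)" by (auto simp: Gset_def)
      show ?thesis unfolding adj1_iff
      proof (intro allI impI)
        fix x assume fx: "cnt T (Suc x) = size T"
        have "1 \<le> cnt A z - cnt B (Suc z)" if "x \<le> z" for z
        proof -
          have "cnt T (Suc x) \<le> cnt T (Suc z)" using that by (simp add: cnt_mono)
          then have fz: "cnt T (Suc z) = size T" using fx cnt_le_size[of T "Suc z"] by simp
          have "cnt T (Suc z) + cnt B (Suc z) + m \<le> cnt A z + (size T + size B)" using g(2) by (simp add: adj_def)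
          then show ?thesis using fz Hs(2) mpos by simp
        qed
        then have "1 \<le> Lf K N A B x" using L_lower[OF H] by blast
        then have "1 \<le> Mf a b x" using LM by simp
        then show "1 \<le> cnt b x" using Mb[of x] by linarith
      qed
    qed
  qed
qed

lemma fin_H: "finite (Hset m n N u)"
proof (rule finite_subset)
  show "Hset m n N u \<subseteq> multisets_of_size {1..N} (n+1) \<times> multisets_of_size {1..N} (m-1)"
    by (auto simp: Hset_def multisets_of_size_def)
qed auto

lemma sum_R1: "(\<Sum>p\<in>Sset m n N u. f (fst p + snd p)) = (\<Sum>p\<in>Hset m n N u. f (fst p + snd p))"
proof -
  have "(\<Sum>p\<in>Sset m n N u. f (fst p + snd p)) = (\<Sum>p\<in>Sset m n N u. f (fst (phi N p) + snd (phi N p)))"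
    by (rule sum.cong) (auto simp: phi_sum)
  also have "\<dots> = (\<Sum>p\<in>Hset m n N u. f (fst p + snd p))"
    using sum.reindex_bij_betw[OF phi_bij, of "\<lambda>p. f (fst p + snd p)"] by simp
  finally show ?thesis .
qed

lemma sum_R2:
  assumes T: "T \<noteq> {#}" "set_mset T \<subseteq> {1..N}"
  shows "(\<Sum>p\<in>{p\<in>Sset m n N u. adj 1 (snd p) T}. f (fst p + snd p))
    = (\<Sum>p\<in>{p\<in>Hset m n N u. adj 1 (snd p) T}. f (fst p + snd p)) + (\<Sum>p\<in>Gset T u. f (fst p + snd p))"
proof -
  let ?S0 = "{p\<in>Sset m n N u. adj 1 (snd p) T}"
  let ?F = "{p\<in>Hset m n N u. adj 1 (snd p) T}"
  have inj: "inj_on (phi N) ?S0" using phi_bij by (rule bij_betw_imp_inj_on[THEN inj_on_subset]) auto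
  have img: "phi N ` ?S0 = ?F \<union> Gset T u"
  proof
    show "phi N ` ?S0 \<subseteq> ?F \<union> Gset T u"
    proof
      fix q assume "q \<in> phi N ` ?S0"
      then obtain a b where ab: "(a,b) \<in> Sset m n N u" "adj 1 b T" "q = phi N (a,b)" by auto
      then show "q \<in> ?F \<union> Gset T u" using G_iff[OF ab(1)] phi_H[OF ab(1)] by auto
    qed
  next
    show "?F \<union> Gset T u \<subseteq> phi N ` ?S0"
    proof
      fix q assume q: "q \<in> ?F \<union> Gset T u"
      then have qH: "q \<in> Hset m n N u" using G_sub_H by auto
      obtain A B where qq: "q = (A,B)" by (cases q)
      have pS: "psi K N (A,B) \<in> Sset m n N u" using psi_S qH qq by simp
      obtain a b where ab: "psi K N (A,B) = (a,b)" by (cases "psi K N (A,B)")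
      have "phi N (a,b) = (A,B)" using phi_psi[of A B] qH qq ab by simp
      moreover have "adj 1 b T" using G_iff[of a b] pS ab q qq calculation by auto
      ultimately show "q \<in> phi N ` ?S0" using pS ab qq by force
    qed
  qed
  have disj: "?F \<inter> Gset T u = {}" using G_disj[OF T] by auto
  have finF: "finite ?F" using fin_H by simp
  have finG: "finite (Gset T u)" using fin_H G_sub_H by (rule finite_subset[rotated])
  have "(\<Sum>p\<in>?S0. f (fst p + snd p)) = (\<Sum>p\<in>?S0. f (fst (phi N p) + snd (phi N p)))"
    by (rule sum.cong) (auto simp: phi_sum)
  also have "\<dots> = (\<Sum>p\<in>phi N ` ?S0. f (fst p + snd p))"
    using sum.reindex[OF inj, of "\<lambda>p. f (fst p + snd p)"] by simp
  also have "\<dots> = (\<Sum>p\<in>?F. f (fst p + snd p)) + (\<Sum>p\<in>Gset T u. f (fst p + snd p))"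
    using img sum.union_disjoint[OF finF finG disj] by simp
  finally show ?thesis .
qed

end



definition mrows :: "nat list \<Rightarrow> nat list \<Rightarrow> nat \<Rightarrow> nat multiset list set" where
  "mrows a b N = {Rs. length Rs = length a \<and> (\<forall>i<length a. size (Rs!i) = a!i \<and> set_mset (Rs!i) \<subseteq> {1..N})
      \<and> (\<forall>i<length b. adj (b!i) (Rs!i) (Rs!(Suc i)))}"

definition wtm :: "(nat \<Rightarrow> 'r::comm_ring_1) \<Rightarrow> nat multiset \<Rightarrow> 'r" where
  "wtm x M = prod_mset (image_mset x M)"

definition wtr :: "(nat \<Rightarrow> 'r::comm_ring_1) \<Rightarrow> nat multiset list \<Rightarrow> 'r" where
  "wtr x Rs = prod_list (map (wtm x) Rs)"

lemma cnt_mset_sorted: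
  "sorted xs \<Longrightarrow> j < length xs \<Longrightarrow> (xs!j \<le> y \<longleftrightarrow> j < cnt (mset xs) y)"
proof (induction xs arbitrary: j)
  case Nil then show ?case by simp
next
  case (Cons z zs)
  show ?case
  proof (cases "z \<le> y")
    case True
    have "cnt (mset (z # zs)) y = Suc (cnt (mset zs) y)" using True by (simp add: cnt_def)
    then show ?thesis using Cons True by (cases j) auto
  next
    case False
    have "\<forall>w\<in>set zs. z \<le> w" using Cons.prems by simp
    then have "cnt (mset (z # zs)) y = 0" using False by (auto simp: cnt_def filter_mset_eq_conv)
    moreover have "z \<le> (z#zs)!j" using Cons.prems sorted_nth_mono[of "z#zs" 0 j] by simp
    ultimately show ?thesis using False by simp
  qed
qed

lemma adj_pointwise:
  assumes sx: "sorted xs" and sy: "sorted ys" and c: "c \<le> length xs" "c \<le> length ys"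
    and pos: "0 \<notin> set ys"
  shows "adj c (mset xs) (mset ys) \<longleftrightarrow> (\<forall>j<c. xs!j < ys!(length ys - c + j))"
proof
  assume h: "adj c (mset xs) (mset ys)"
  show "\<forall>j<c. xs!j < ys!(length ys - c + j)"
  proof (intro allI impI)
    fix j assume j: "j < c"
    define y where "y = ys!(length ys - c + j)"
    have iy: "length ys - c + j < length ys" using j c by simp
    then have "y \<in> set ys" by (simp add: y_def)
    then have ypos: "y \<noteq> 0" using pos by (metis)
    show "xs!j < y"
    proof (rule ccontr)
      assume "\<not> xs!j < y"
      then have "\<not> xs!j \<le> y - 1" using ypos by simp
      then have cx: "cnt (mset xs) (y - 1) \<le> j" using cnt_mset_sorted[OF sx, of j "y-1"] j c by simp
      have "length ys - c + j < cnt (mset ys) y" using cnt_mset_sorted[OF sy iy, of y] by (simp add: y_def)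
      moreover have "cnt (mset ys) (Suc (y - 1)) + c \<le> cnt (mset xs) (y - 1) + size (mset ys)"
        using h by (simp add: adj_def)
      ultimately show False using cx ypos c by simp
    qed
  qed
next
  assume h: "\<forall>j<c. xs!j < ys!(length ys - c + j)"
  show "adj c (mset xs) (mset ys)" unfolding adj_def
  proof
    fix x
    define d where "d = cnt (mset ys) (Suc x)"
    have dle: "d \<le> length ys" using cnt_le_size[of "mset ys" "Suc x"] by (simp add: d_def)
    show "cnt (mset ys) (Suc x) + c \<le> cnt (mset xs) x + size (mset ys)"
    proof (cases "d + c \<le> length ys")
      case True then show ?thesis by (simp add: d_def)
    next
      case False
      define e where "e = d - (length ys - c)"
      have e1: "1 \<le> e" "e \<le> c" using False dle c by (auto simp: e_def)
      have ide: "length ys - c + (e - 1) = d - 1" using False e1 by (simp add: e_def)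
      have d1: "1 \<le> d" using False c by linarith
      have "d - 1 < length ys" using False dle c by linarith
      moreover have "d - 1 < d" using d1 by simp
      ultimately have "ys!(d-1) \<le> Suc x" using cnt_mset_sorted[OF sy, of "d-1" "Suc x"] by (simp add: d_def)
      moreover have "xs!(e-1) < ys!(d-1)" using h e1 ide by (metis diff_less less_le_trans zero_less_one)
      ultimately have "xs!(e-1) \<le> x" by simp
      then have "e - 1 < cnt (mset xs) x" using cnt_mset_sorted[OF sx, of "e-1" x] e1 c by simp
      then have "d - (length ys - c) \<le> cnt (mset xs) x" using e1 by (simp add: e_def)
      then show ?thesis using c False by (simp add: d_def)
    qed
  qed
qed


locale ovl =
  fixes a b :: "nat list"
  assumes valid: "ov_valid a b"
begin

abbreviation "lam i \<equiv> ov_right a b i"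
definition "mu i = ov_right a b i - int (a!i)"

lemma lenb: "length b + 1 = length a" using valid by (simp add: ov_valid_def)

lemma bnd: "i < length b \<Longrightarrow> b!i \<le> a!i \<and> b!i \<le> a!(Suc i)"
  using valid by (simp add: ov_valid_def)

lemma lam_Suc: "lam (Suc i) = mu i + int (b!i)"
  by (simp add: mu_def)

lemma mu_Suc: "mu (Suc i) = mu i + int (b!i) - int (a!(Suc i))"
  by (simp add: mu_def)

lemma mono_step: "i < length b \<Longrightarrow> lam (Suc i) \<le> lam i \<and> mu (Suc i) \<le> mu i"
  using bnd[of i] by (simp add: mu_Suc lam_Suc)

lemma mono_lm: "i \<le> i' \<Longrightarrow> i' < length a \<Longrightarrow> lam i' \<le> lam i \<and> mu i' \<le> mu i"
proof (induction i' rule: dec_induct)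
  case base then show ?case by simp
next
  case (step k)
  have "k < length b" using step lenb by simp
  then show ?case using step mono_step[of k] by auto
qed

lemma D_def': "ov_cells a b = {(i,j). i < length a \<and> mu i < j \<and> j \<le> lam i}"
  by (simp add: ov_cells_def mu_def)

lemma inD: "i < length a \<Longrightarrow> j < a!i \<Longrightarrow> (i, mu i + 1 + int j) \<in> ov_cells a b"
  by (simp add: D_def' mu_def)

lemma contig:
  assumes "(i,c) \<in> ov_cells a b" "(i',c) \<in> ov_cells a b" "i < i'"
  shows "(Suc i, c) \<in> ov_cells a b"
proof -
  have "Suc i \<le> i'" "i' < length a" using assms by (auto simp: D_def')
  then have "lam i' \<le> lam (Suc i)" "mu (Suc i) \<le> mu i" using mono_lm[of "Suc i" i'] mono_lm[of i "Suc i"] by auto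
  then show ?thesis using assms \<open>Suc i \<le> i'\<close> \<open>i' < length a\<close> by (auto simp: D_def')
qed

definition rowl :: "(nat \<times> int \<Rightarrow> nat) \<Rightarrow> nat \<Rightarrow> nat list" where
  "rowl T i = map (\<lambda>j. T (i, mu i + 1 + int j)) [0..<a!i]"

definition Theta :: "(nat \<times> int \<Rightarrow> nat) \<Rightarrow> nat multiset list" where
  "Theta T = map (\<lambda>i. mset (rowl T i)) [0..<length a]"

lemma rowl_len[simp]: "length (rowl T i) = a!i" by (simp add: rowl_def)

lemma rowl_nth: "j < a!i \<Longrightarrow> rowl T i ! j = T (i, mu i + 1 + int j)" by (simp add: rowl_def)

context
  fixes N :: nat and T
  assumes T: "T \<in> ssyt (ov_cells a b) N"
begin

lemma T_range: "c \<in> ov_cells a b \<Longrightarrow> T c \<in> {1..N}" using T by (simp add: ssyt_def)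

lemma T_row: "(i,j) \<in> ov_cells a b \<Longrightarrow> (i,j') \<in> ov_cells a b \<Longrightarrow> j < j' \<Longrightarrow> T (i,j) \<le> T (i,j')"
  using T by (simp add: ssyt_def)

lemma T_col: "(i,j) \<in> ov_cells a b \<Longrightarrow> (i',j) \<in> ov_cells a b \<Longrightarrow> i < i' \<Longrightarrow> T (i,j) < T (i',j)"
  using T by (simp add: ssyt_def)

lemma rowl_sorted: "i < length a \<Longrightarrow> sorted (rowl T i)"
  unfolding sorted_iff_nth_mono_less by (auto simp: rowl_nth intro!: T_row inD)

lemma rowl_set: "i < length a \<Longrightarrow> set (rowl T i) \<subseteq> {1..N}"
  using T_range inD by (auto simp: rowl_def)

lemma Theta_in: "Theta T \<in> mrows a b N"
proof -
  have adj: "adj (b!i) (mset (rowl T i)) (mset (rowl T (Suc i)))" if i: "i < length b" for i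
  proof -
    have ia: "i < length a" "Suc i < length a" using i lenb by auto
    have z: "0 \<notin> set (rowl T (Suc i))" using rowl_set[OF ia(2)] by auto
    have "(\<forall>j<b!i. rowl T i ! j < rowl T (Suc i) ! (length (rowl T (Suc i)) - b!i + j))"
    proof (intro allI impI)
      fix j assume j: "j < b!i"
      have j1: "j < a!i" "a!(Suc i) - b!i + j < a!(Suc i)" using j bnd[OF i] by auto
      have col: "mu (Suc i) + 1 + int (a!(Suc i) - b!i + j) = mu i + 1 + int j"
        using bnd[OF i] by (simp add: mu_Suc of_nat_diff)
      have c2: "(Suc i, mu i + 1 + int j) \<in> ov_cells a b"
        using inD[OF ia(2) j1(2)] by (simp only: col)
      show "rowl T i ! j < rowl T (Suc i) ! (length (rowl T (Suc i)) - b!i + j)"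
      proof -
        have r2: "rowl T (Suc i) ! (a!(Suc i) - b!i + j) = T (Suc i, mu i + 1 + int j)"
          by (simp only: rowl_nth[OF j1(2)] col)
        show ?thesis using T_col[OF inD[OF ia(1) j1(1)] c2] r2 rowl_nth[OF j1(1)] by simp
      qed
    qed
    then show ?thesis using adj_pointwise[OF rowl_sorted[OF ia(1)] rowl_sorted[OF ia(2)] _ _ z] bnd[OF i] by simp
  qed
  show ?thesis unfolding mrows_def Theta_def using adj rowl_set lenb
    by (auto simp: subset_iff)
qed

end

lemma D_cell: "(i,c) \<in> ov_cells a b \<Longrightarrow> nat (c - mu i - 1) < a!i \<and> c = mu i + 1 + int (nat (c - mu i - 1)) \<and> i < length a"
  by (auto simp: D_def' mu_def)

lemma sorted_mset_eq: "sorted xs \<Longrightarrow> sorted ys \<Longrightarrow> mset xs = mset ys \<Longrightarrow> xs = ys"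
  by (metis properties_for_sort sorted_sort_id)

lemma Theta_inj: "inj_on Theta (ssyt (ov_cells a b) N)"
proof (rule inj_onI)
  fix T1 T2 assume T1: "T1 \<in> ssyt (ov_cells a b) N" and T2: "T2 \<in> ssyt (ov_cells a b) N" and eq: "Theta T1 = Theta T2"
  have rows: "rowl T1 i = rowl T2 i" if i: "i < length a" for i
  proof -
    have "Theta T1 ! i = Theta T2 ! i" using eq by simp
    then have "mset (rowl T1 i) = mset (rowl T2 i)" using i by (simp add: Theta_def)
    then show ?thesis using rowl_sorted[OF T1 i] rowl_sorted[OF T2 i] sorted_mset_eq by blast
  qed
  show "T1 = T2"
  proof
    fix p :: "nat \<times> int"
    obtain i c where p: "p = (i,c)" by (cases p)
    show "T1 p = T2 p"
    proof (cases "(i,c) \<in> ov_cells a b")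
      case True
      define j where "j = nat (c - mu i - 1)"
      have j: "j < a!i" "c = mu i + 1 + int j" "i < length a" using D_cell[OF True] by (auto simp: j_def)
      have "T1 (i,c) = rowl T1 i ! j" using j by (simp add: rowl_nth)
      also have "\<dots> = rowl T2 i ! j" using rows j by simp
      also have "\<dots> = T2 (i,c)" using j by (simp add: rowl_nth)
      finally show ?thesis using p by simp
    next
      case False then show ?thesis using T1 T2 p by (simp add: ssyt_def)
    qed
  qed
qed

context
  fixes N Rs
  assumes Rs: "Rs \<in> mrows a b N"
begin

definition "sl i = sorted_list_of_multiset (Rs!i)"
definition "Tof p = (if p \<in> ov_cells a b then sl (fst p) ! nat (snd p - mu (fst p) - 1) else 0)"

lemma sl_props: "i < length a \<Longrightarrow> length (sl i) = a!i \<and> sorted (sl i) \<and> set (sl i) \<subseteq> {1..N} \<and> mset (sl i) = Rs!i"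
proof -
  assume i: "i < length a"
  have "size (Rs!i) = a!i" "set_mset (Rs!i) \<subseteq> {1..N}" using Rs i by (auto simp: mrows_def)
  moreover have "length (sorted_list_of_multiset M) = size M" for M :: "nat multiset"
    by (metis size_mset mset_sorted_list_of_multiset)
  ultimately show ?thesis by (simp add: sl_def)
qed

lemma Tof_cell: "(i,c) \<in> ov_cells a b \<Longrightarrow> Tof (i,c) = sl i ! nat (c - mu i - 1)"
  by (simp add: Tof_def)

lemma Tof_adj:
  assumes c1: "(i,c) \<in> ov_cells a b" and c2: "(Suc i, c) \<in> ov_cells a b"
  shows "Tof (i,c) < Tof (Suc i, c)"
proof -
  have ia: "Suc i < length a" using c2 by (simp add: D_def')
  then have ib: "i < length b" using lenb by simp
  define j where "j = nat (c - mu i - 1)"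
  have jb: "j < b!i" using c1 c2 by (auto simp: D_def' j_def mu_def)
  have idx: "nat (c - mu (Suc i) - 1) = a!(Suc i) - b!i + j"
    using c1 c2 bnd[OF ib] by (auto simp: D_def' j_def mu_Suc)
  have P1: "length (sl i) = a!i" "sorted (sl i)" "mset (sl i) = Rs!i" using sl_props[of i] ia by auto
  have P2: "length (sl (Suc i)) = a!(Suc i)" "sorted (sl (Suc i))" "mset (sl (Suc i)) = Rs!(Suc i)"
    "set (sl (Suc i)) \<subseteq> {1..N}" using sl_props[OF ia] by auto
  have z: "0 \<notin> set (sl (Suc i))" using P2(4) by auto
  have "adj (b!i) (Rs!i) (Rs!(Suc i))" using Rs ib by (simp add: mrows_def)
  then have "\<forall>j<b!i. sl i ! j < sl (Suc i) ! (length (sl (Suc i)) - b!i + j)"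
    using adj_pointwise[OF P1(2) P2(2) _ _ z] P1 P2 bnd[OF ib] by simp
  then show ?thesis using jb idx P2(1) by (simp add: Tof_cell c1 c2 j_def)
qed

lemma Tof_ssyt: "Tof \<in> ssyt (ov_cells a b) N"
proof -
  have r: "Tof c \<in> {1..N}" if "c \<in> ov_cells a b" for c
  proof -
    obtain i cc where c: "c = (i,cc)" by (cases c)
    have "nat (cc - mu i - 1) < a!i" "i < length a" using D_cell that c by auto
    then have "sl i ! nat (cc - mu i - 1) \<in> set (sl i)" using sl_props[of i] by simp
    then show ?thesis using sl_props[of i] c that \<open>i < length a\<close> by (auto simp: Tof_cell)
  qed
  have z: "Tof c = 0" if "c \<notin> ov_cells a b" for c using that by (simp add: Tof_def)
  have row: "Tof (i,j) \<le> Tof (i,j')" if "(i,j) \<in> ov_cells a b" "(i,j') \<in> ov_cells a b" "j < j'" for i j j'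
  proof -
    have "nat (j' - mu i - 1) < a!i" "i < length a" using D_cell that by auto
    moreover have "nat (j - mu i - 1) \<le> nat (j' - mu i - 1)" using that by simp
    ultimately show ?thesis using sl_props[of i] that by (auto simp: Tof_cell intro: sorted_nth_mono)
  qed
  have col: "Tof (i,j) < Tof (i',j)" if "(i,j) \<in> ov_cells a b" "(i',j) \<in> ov_cells a b" "i < i'" for i i' j
    using that
  proof (induction "i' - i" arbitrary: i)
    case 0 then show ?case by simp
  next
    case (Suc d)
    have s1: "(Suc i, j) \<in> ov_cells a b" using contig Suc.prems by blast
    have a1: "Tof (i,j) < Tof (Suc i, j)" using Tof_adj Suc.prems(1) s1 by blast
    show ?case
    proof (cases "Suc i = i'")
      case True then show ?thesis using a1 by simp
    next
      case False
      then have "Tof (Suc i, j) < Tof (i', j)" using Suc s1 by simp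
      then show ?thesis using a1 by simp
    qed
  qed
  show ?thesis unfolding ssyt_def using r z row col by blast
qed

lemma Theta_Tof: "Theta Tof = Rs"
proof (rule nth_equalityI)
  show "length (Theta Tof) = length Rs" using Rs by (simp add: Theta_def mrows_def)
next
  fix i assume "i < length (Theta Tof)"
  then have i: "i < length a" by (simp add: Theta_def)
  have "rowl Tof i = sl i"
  proof (rule nth_equalityI)
    show "length (rowl Tof i) = length (sl i)" using sl_props[OF i] by simp
  next
    fix j assume "j < length (rowl Tof i)"
    then have j: "j < a!i" by simp
    show "rowl Tof i ! j = sl i ! j" using inD[OF i j] j by (simp add: rowl_nth Tof_cell)
  qed
  then show "Theta Tof ! i = Rs ! i" using i sl_props[OF i] by (simp add: Theta_def)
qed

end

lemma Theta_bij: "bij_betw Theta (ssyt (ov_cells a b) N) (mrows a b N)"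
proof -
  have "Theta ` ssyt (ov_cells a b) N = mrows a b N"
  proof
    show "Theta ` ssyt (ov_cells a b) N \<subseteq> mrows a b N" using Theta_in by blast
    show "mrows a b N \<subseteq> Theta ` ssyt (ov_cells a b) N"
      using Theta_Tof Tof_ssyt by (metis image_eqI subsetI)
  qed
  then show ?thesis using Theta_inj by (simp add: bij_betw_def)
qed

lemma wt_Theta:
  fixes x :: "nat \<Rightarrow> 'r::comm_ring_1"
  shows "(\<Prod>c\<in>ov_cells a b. x (T c)) = wtr x (Theta T)"
proof -
  define h where "h = (\<lambda>(i,j). (i, mu i + 1 + int (j::nat)))"
  define S where "S = (SIGMA i:{..<length a}. {..<a!i})"
  have inj: "inj_on h S" by (auto simp: inj_on_def h_def S_def)
  have img: "h ` S = ov_cells a b"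
  proof
    show "h ` S \<subseteq> ov_cells a b" using inD by (auto simp: h_def S_def)
    show "ov_cells a b \<subseteq> h ` S"
    proof
      fix p assume p: "p \<in> ov_cells a b"
      obtain i c where pc: "p = (i,c)" by (cases p)
      then have "nat (c - mu i - 1) < a!i \<and> c = mu i + 1 + int (nat (c - mu i - 1)) \<and> i < length a"
        using D_cell p by blast
      then have "(i, nat (c - mu i - 1)) \<in> S" "h (i, nat (c - mu i - 1)) = p" by (auto simp: S_def h_def pc)
      then show "p \<in> h ` S" by (metis image_eqI)
    qed
  qed
  have "(\<Prod>c\<in>ov_cells a b. x (T c)) = (\<Prod>p\<in>S. x (T (h p)))"
    using prod.reindex[OF inj, of "\<lambda>c. x (T c)"] img by simp
  also have "\<dots> = (\<Prod>i<length a. \<Prod>j<a!i. x (T (i, mu i + 1 + int j)))"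
  proof -
    have "(\<Prod>i<length a. \<Prod>j<a!i. x (T (h (i,j)))) = (\<Prod>(i,j)\<in>S. x (T (h (i,j))))"
      unfolding S_def by (rule prod.Sigma) auto
    moreover have "(\<Prod>(i,j)\<in>S. x (T (h (i,j)))) = (\<Prod>p\<in>S. x (T (h p)))" by (rule prod.cong) auto
    ultimately show ?thesis by (simp add: h_def)
  qed
  also have "\<dots> = wtr x (Theta T)"
  proof -
    have e: "wtm x (mset (rowl T i)) = (\<Prod>j<a!i. x (T (i, mu i + 1 + int j)))" for i
    proof -
      have "wtm x (mset (rowl T i)) = prod_list (map x (rowl T i))"
        by (simp add: wtm_def prod_mset_prod_list[symmetric])
      also have "\<dots> = prod_list (map (\<lambda>j. x (T (i, mu i + 1 + int j))) [0..<a!i])"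
        by (simp add: rowl_def comp_def)
      also have "\<dots> = (\<Prod>j<a!i. x (T (i, mu i + 1 + int j)))"
        by (simp add: prod.distinct_set_conv_list[symmetric] atLeast0LessThan)
      finally show ?thesis .
    qed
    have "wtr x (Theta T) = prod_list (map (\<lambda>i. wtm x (mset (rowl T i))) [0..<length a])"
      by (simp add: wtr_def Theta_def comp_def)
    also have "\<dots> = (\<Prod>i<length a. wtm x (mset (rowl T i)))"
      by (simp add: prod.distinct_set_conv_list[symmetric] atLeast0LessThan)
    finally show ?thesis using e by simp
  qed
  finally show ?thesis .
qed

lemma skew_mrows:
  fixes x :: "nat \<Rightarrow> 'r::comm_ring_1"
  shows "skew_schur (ov_cells a b) N x = (\<Sum>Rs\<in>mrows a b N. wtr x Rs)"
proof -
  have "skew_schur (ov_cells a b) N x = (\<Sum>T\<in>ssyt (ov_cells a b) N. wtr x (Theta T))"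
    unfolding skew_schur_def by (rule sum.cong) (auto simp: wt_Theta)
  also have "\<dots> = (\<Sum>Rs\<in>mrows a b N. wtr x Rs)"
    by (rule sum.reindex_bij_betw[OF Theta_bij])
  finally show ?thesis .
qed

end



definition SG :: "nat list \<Rightarrow> nat list \<Rightarrow> nat \<Rightarrow> nat multiset list set" where
  "SG s sb N = (if s = [] then {[]} else mrows s (butlast sb) N)"

definition TG :: "nat list \<Rightarrow> nat list \<Rightarrow> nat \<Rightarrow> nat multiset list set" where
  "TG t tb N = (if t = [] then {[]} else mrows t (tl tb) N)"

definition Mid :: "nat \<Rightarrow> nat \<Rightarrow> nat \<Rightarrow> nat \<Rightarrow> nat \<Rightarrow> nat \<Rightarrow> nat multiset list \<Rightarrow> nat multiset list
    \<Rightarrow> (nat multiset \<times> nat multiset) set" where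
  "Mid p q c e1 e2 N Rs Rt = {(A,B). size A = p \<and> size B = q \<and> set_mset A \<subseteq> {1..N} \<and> set_mset B \<subseteq> {1..N}
     \<and> adj c A B \<and> (Rs = [] \<or> adj e1 (last Rs) A) \<and> (Rt = [] \<or> adj e2 B (hd Rt))}"

lemma nth_mid: "length Rs = s \<Longrightarrow> (Rs @ [A,B] @ Rt) ! i =
   (if i < s then Rs!i else if i = s then A else if i = Suc s then B else Rt ! (i - Suc (Suc s)))"
  by (auto simp: nth_append nth_Cons' split: if_splits)

lemma nth_mid1: "length sb = s \<Longrightarrow> (sb @ [c] @ tb) ! i =
   (if i < s then sb!i else if i = s then c else tb ! (i - Suc s))"
  by (auto simp: nth_append nth_Cons' split: if_splits)

lemma mrows_len: "Rs \<in> mrows a b N \<Longrightarrow> length Rs = length a"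
  by (simp add: mrows_def)

lemma SG_len: "Rs \<in> SG s sb N \<Longrightarrow> length Rs = length s"
  by (auto simp: SG_def mrows_def split: if_splits)

lemma TG_len: "Rt \<in> TG t tb N \<Longrightarrow> length Rt = length t"
  by (auto simp: TG_def mrows_def split: if_splits)

lemma mid_iff:
  assumes L: "length sb = length s" "length tb = length t" "length Rs = length s" "length Rt = length t"
  shows "Rs @ [A,B] @ Rt \<in> mrows (s @ [p,q] @ t) (sb @ [c] @ tb) N \<longleftrightarrow>
    Rs \<in> SG s sb N \<and> Rt \<in> TG t tb N \<and> (A,B) \<in> Mid p q c (last sb) (hd tb) N Rs Rt"
  (is "?L \<longleftrightarrow> ?R")
proof -
  let ?X = "Rs @ [A,B] @ Rt" and ?a = "s @ [p,q] @ t" and ?b = "sb @ [c] @ tb"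
  define k where "k = length s"
  have nX: "(Rs @ A # B # Rt) ! i = (if i < k then Rs!i else if i = k then A else if i = Suc k then B else Rt ! (i - Suc (Suc k)))" for i
    using nth_mid[OF L(3)] k_def by simp
  have na: "(s @ p # q # t) ! i = (if i < k then s!i else if i = k then p else if i = Suc k then q else t ! (i - Suc (Suc k)))" for i
    using nth_mid[of s k p q t] k_def by simp
  have nb: "(sb @ c # tb) ! i = (if i < k then sb!i else if i = k then c else tb ! (i - Suc k))" for i
    using nth_mid1[of sb k c tb] L(1) k_def by simp
  have la: "length ?a = k + 2 + length t" "length ?b = k + 1 + length t" using L k_def by auto
  define P where "P = (\<lambda>i. size (?X!i) = ?a!i \<and> set_mset (?X!i) \<subseteq> {1..N})"
  define Q where "Q = (\<lambda>i. adj (?b!i) (?X!i) (?X!(Suc i)))"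
  have Lr: "?L \<longleftrightarrow> (\<forall>i<k + 2 + length t. P i) \<and> (\<forall>i<k + 1 + length t. Q i)"
    using L la by (simp add: mrows_def P_def Q_def k_def)
  have P_split: "(\<forall>i<k + 2 + length t. P i) \<longleftrightarrow>
     (\<forall>i<k. size (Rs!i) = s!i \<and> set_mset (Rs!i) \<subseteq> {1..N}) \<and> size A = p \<and> set_mset A \<subseteq> {1..N}
     \<and> size B = q \<and> set_mset B \<subseteq> {1..N} \<and> (\<forall>j<length t. size (Rt!j) = t!j \<and> set_mset (Rt!j) \<subseteq> {1..N})"
  proof
    assume h: "\<forall>i<k + 2 + length t. P i"
    have "P i" if "i < k" for i using h that by simp
    moreover have "P k" "P (Suc k)" using h by auto
    moreover have "P (j + Suc (Suc k))" if "j < length t" for j using h that by simp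
    ultimately show "(\<forall>i<k. size (Rs!i) = s!i \<and> set_mset (Rs!i) \<subseteq> {1..N}) \<and> size A = p \<and> set_mset A \<subseteq> {1..N}
     \<and> size B = q \<and> set_mset B \<subseteq> {1..N} \<and> (\<forall>j<length t. size (Rt!j) = t!j \<and> set_mset (Rt!j) \<subseteq> {1..N})"
      by (simp add: P_def nX na)
  next
    assume h: "(\<forall>i<k. size (Rs!i) = s!i \<and> set_mset (Rs!i) \<subseteq> {1..N}) \<and> size A = p \<and> set_mset A \<subseteq> {1..N}
     \<and> size B = q \<and> set_mset B \<subseteq> {1..N} \<and> (\<forall>j<length t. size (Rt!j) = t!j \<and> set_mset (Rt!j) \<subseteq> {1..N})"
    show "\<forall>i<k + 2 + length t. P i"
    proof (intro allI impI)
      fix i assume i: "i < k + 2 + length t"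
      consider "i < k" | "i = k" | "i = Suc k" | "Suc (Suc k) \<le> i" by linarith
      then show "P i"
      proof cases
        case 4 then have "i - Suc (Suc k) < length t" using i by simp
        then show ?thesis using h 4 by (simp add: P_def nX na)
      qed (use h in \<open>auto simp: P_def nX na\<close>)
    qed
  qed
  have Q_split: "(\<forall>i<k + 1 + length t. Q i) \<longleftrightarrow>
     (\<forall>i. Suc i < k \<longrightarrow> adj (sb!i) (Rs!i) (Rs!(Suc i))) \<and> (k = 0 \<or> adj (last sb) (last Rs) A)
     \<and> adj c A B \<and> (length t = 0 \<or> adj (hd tb) B (hd Rt))
     \<and> (\<forall>j. Suc j < length t \<longrightarrow> adj (tb!(Suc j)) (Rt!j) (Rt!(Suc j)))"
  proof -
    have lastS: "k \<noteq> 0 \<Longrightarrow> last Rs = Rs!(k - 1) \<and> last sb = sb!(k-1)"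
    proof -
      assume "k \<noteq> 0"
      then have "Rs \<noteq> []" "sb \<noteq> []" using L k_def by auto
      then show ?thesis using L k_def by (simp add: last_conv_nth)
    qed
    have hdT: "length t \<noteq> 0 \<Longrightarrow> hd Rt = Rt!0 \<and> hd tb = tb!0"
    proof -
      assume "length t \<noteq> 0"
      then have "Rt \<noteq> []" "tb \<noteq> []" using L by auto
      then show ?thesis by (simp add: hd_conv_nth)
    qed
    show ?thesis
    proof
      assume h: "\<forall>i<k + 1 + length t. Q i"
      have a1: "\<forall>i. Suc i < k \<longrightarrow> adj (sb!i) (Rs!i) (Rs!(Suc i))"
      proof (intro allI impI)
        fix i assume "Suc i < k" then show "adj (sb!i) (Rs!i) (Rs!(Suc i))" using h[rule_format, of i] by (simp add: Q_def nX nb)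
      qed
      have a2: "k = 0 \<or> adj (last sb) (last Rs) A"
      proof (cases "k = 0")
        case False
        then have "Q (k - 1)" using h by simp
        then show ?thesis using False lastS by (simp add: Q_def nX nb)
      qed simp
      have a3: "adj c A B" using h[rule_format, of k] by (simp add: Q_def nX nb)
      have a4: "length t = 0 \<or> adj (hd tb) B (hd Rt)"
      proof (cases "length t = 0")
        case False
        then have "Q (Suc k)" using h by simp
        then show ?thesis using False hdT by (simp add: Q_def nX nb)
      qed simp
      have a5: "\<forall>j. Suc j < length t \<longrightarrow> adj (tb!(Suc j)) (Rt!j) (Rt!(Suc j))"
      proof (intro allI impI)
        fix j assume "Suc j < length t"
        then have "Q (j + Suc (Suc k))" using h by simp
        then show "adj (tb!(Suc j)) (Rt!j) (Rt!(Suc j))" by (simp add: Q_def nX nb)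
      qed
      show "(\<forall>i. Suc i < k \<longrightarrow> adj (sb!i) (Rs!i) (Rs!(Suc i))) \<and> (k = 0 \<or> adj (last sb) (last Rs) A)
        \<and> adj c A B \<and> (length t = 0 \<or> adj (hd tb) B (hd Rt))
        \<and> (\<forall>j. Suc j < length t \<longrightarrow> adj (tb!(Suc j)) (Rt!j) (Rt!(Suc j)))" using a1 a2 a3 a4 a5 by blast
    next
      assume h: "(\<forall>i. Suc i < k \<longrightarrow> adj (sb!i) (Rs!i) (Rs!(Suc i))) \<and> (k = 0 \<or> adj (last sb) (last Rs) A)
        \<and> adj c A B \<and> (length t = 0 \<or> adj (hd tb) B (hd Rt))
        \<and> (\<forall>j. Suc j < length t \<longrightarrow> adj (tb!(Suc j)) (Rt!j) (Rt!(Suc j)))"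
      show "\<forall>i<k + 1 + length t. Q i"
      proof (intro allI impI)
        fix i assume i: "i < k + 1 + length t"
        consider "Suc i < k" | "Suc i = k" | "i = k" | "i = Suc k" | "Suc (Suc k) \<le> i" by linarith
        then show "Q i"
        proof cases
          case 1 then show ?thesis using h by (simp add: Q_def nX nb)
        next
          case 2
          then have "k \<noteq> 0" "i = k - 1" by auto
          then show ?thesis using h lastS by (simp add: Q_def nX nb)
        next
          case 3 then show ?thesis using h by (simp add: Q_def nX nb)
        next
          case 4
          then have "length t \<noteq> 0" using i by simp
          then show ?thesis using h hdT 4 by (simp add: Q_def nX nb)
        next
          case 5
          define j where "j = i - Suc (Suc k)"
          have j: "Suc j < length t" "i = j + Suc (Suc k)" using i 5 by (auto simp: j_def)
          have "adj (tb!(Suc j)) (Rt!j) (Rt!(Suc j))" using h j by blast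
          moreover have "i - Suc k = Suc j" "Suc i - Suc (Suc k) = Suc j" using j by auto
          ultimately show ?thesis using j by (simp add: Q_def nX nb)
        qed
      qed
    qed
  qed
  have SGc: "Rs \<in> SG s sb N \<longleftrightarrow> (\<forall>i<k. size (Rs!i) = s!i \<and> set_mset (Rs!i) \<subseteq> {1..N})
      \<and> (\<forall>i. Suc i < k \<longrightarrow> adj (sb!i) (Rs!i) (Rs!(Suc i)))"
    using L k_def by (auto simp: SG_def mrows_def nth_butlast)
  have TGc: "Rt \<in> TG t tb N \<longleftrightarrow> (\<forall>j<length t. size (Rt!j) = t!j \<and> set_mset (Rt!j) \<subseteq> {1..N})
      \<and> (\<forall>j. Suc j < length t \<longrightarrow> adj (tb!(Suc j)) (Rt!j) (Rt!(Suc j)))"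
    using L by (auto simp: TG_def mrows_def nth_tl)
  have emp: "Rs = [] \<longleftrightarrow> k = 0" "Rt = [] \<longleftrightarrow> length t = 0" using L k_def by auto
  show ?thesis unfolding Lr P_split Q_split SGc TGc Mid_def using emp by auto
qed


lemma fin_msets: "finite {R :: nat multiset. set_mset R \<subseteq> {1..N} \<and> size R \<le> S}"
proof -
  have "{R :: nat multiset. set_mset R \<subseteq> {1..N} \<and> size R \<le> S} = (\<Union>p\<in>{..S}. multisets_of_size {1..N} p)"
    by (auto simp: multisets_of_size_def)
  then show ?thesis by auto
qed

lemma fin_mrows: "finite (mrows a b N)"
proof (rule finite_subset)
  let ?M = "{R :: nat multiset. set_mset R \<subseteq> {1..N} \<and> size R \<le> sum_list a}"
  show "mrows a b N \<subseteq> {xs. set xs \<subseteq> ?M \<and> length xs = length a}"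
  proof
    fix Rs assume h: "Rs \<in> mrows a b N"
    have "set Rs \<subseteq> ?M"
    proof
      fix R assume "R \<in> set Rs"
      then obtain i where i: "i < length Rs" "R = Rs!i" by (metis in_set_conv_nth)
      then show "R \<in> ?M" using h elem_le_sum_list[of i a] by (auto simp: mrows_def)
    qed
    then show "Rs \<in> {xs. set xs \<subseteq> ?M \<and> length xs = length a}" using h by (simp add: mrows_def)
  qed
  show "finite {xs. set xs \<subseteq> ?M \<and> length xs = length a}"
    by (rule finite_lists_length_eq) (rule fin_msets)
qed

lemma fin_SG: "finite (SG s sb N)" by (simp add: SG_def fin_mrows)
lemma fin_TG: "finite (TG t tb N)" by (simp add: TG_def fin_mrows)

lemma fin_Mid: "finite (Mid p q c e1 e2 N Rs Rt)"
proof (rule finite_subset)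
  show "Mid p q c e1 e2 N Rs Rt \<subseteq> multisets_of_size {1..N} p \<times> multisets_of_size {1..N} q"
    by (auto simp: Mid_def multisets_of_size_def)
qed auto

lemma wtr_app: "wtr x (Rs @ A # B # Rt) = wtr x Rs * (wtm x A * wtm x B) * wtr x Rt"
  by (simp add: wtr_def mult_ac)

lemma mid_sum:
  fixes x :: "nat \<Rightarrow> 'r::comm_ring_1"
  assumes L: "length sb = length s" "length tb = length t"
  shows "(\<Sum>Rs\<in>mrows (s @ [p,q] @ t) (sb @ [c] @ tb) N. wtr x Rs) =
    (\<Sum>Rs\<in>SG s sb N. \<Sum>Rt\<in>TG t tb N. wtr x Rs * wtr x Rt *
        (\<Sum>AB\<in>Mid p q c (last sb) (hd tb) N Rs Rt. wtm x (fst AB) * wtm x (snd AB)))"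
proof -
  define Z where "Z = (SIGMA Rs:SG s sb N. SIGMA Rt:TG t tb N. Mid p q c (last sb) (hd tb) N Rs Rt)"
  define h :: "nat multiset list \<times> nat multiset list \<times> nat multiset \<times> nat multiset \<Rightarrow> nat multiset list"
    where "h = (\<lambda>(Rs, Rt, AB). Rs @ [fst AB, snd AB] @ Rt)"
  have inj: "inj_on h Z"
  proof (rule inj_onI)
    fix z1 z2 assume z1: "z1 \<in> Z" and z2: "z2 \<in> Z" and e: "h z1 = h z2"
    obtain R1 T1 A1 B1 where zz1: "z1 = (R1, T1, (A1, B1))" by (cases z1) auto
    obtain R2 T2 A2 B2 where zz2: "z2 = (R2, T2, (A2, B2))" by (cases z2) auto
    have l: "length R1 = length s" "length R2 = length s" using z1 z2 zz1 zz2 SG_len by (auto simp: Z_def)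
    have "R1 @ [A1,B1] @ T1 = R2 @ [A2,B2] @ T2" using e zz1 zz2 by (simp add: h_def)
    then show "z1 = z2" using l zz1 zz2 by (auto simp: append_eq_append_conv)
  qed
  have img: "h ` Z = mrows (s @ [p,q] @ t) (sb @ [c] @ tb) N"
  proof
    show "h ` Z \<subseteq> mrows (s @ [p,q] @ t) (sb @ [c] @ tb) N"
    proof
      fix X assume "X \<in> h ` Z"
      then obtain Rs Rt A B where "X = Rs @ [A,B] @ Rt" "Rs \<in> SG s sb N" "Rt \<in> TG t tb N"
          "(A,B) \<in> Mid p q c (last sb) (hd tb) N Rs Rt"
        by (auto simp: Z_def h_def)
      then show "X \<in> mrows (s @ [p,q] @ t) (sb @ [c] @ tb) N"
        using mid_iff[OF L SG_len TG_len] by blast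
    qed
  next
    show "mrows (s @ [p,q] @ t) (sb @ [c] @ tb) N \<subseteq> h ` Z"
    proof
      fix X assume X: "X \<in> mrows (s @ [p,q] @ t) (sb @ [c] @ tb) N"
      then have lX: "length X = length s + 2 + length t" by (simp add: mrows_def)
      define Rs where "Rs = take (length s) X"
      define Rt where "Rt = drop (length s + 2) X"
      have lR: "length Rs = length s" "length Rt = length t" using lX by (auto simp: Rs_def Rt_def)
      have XX: "X = Rs @ [X ! length s, X ! Suc (length s)] @ Rt"
      proof -
        have "X = take (length s) X @ drop (length s) X" by simp
        moreover have "drop (length s) X = [X ! length s, X ! Suc (length s)] @ drop (length s + 2) X"
          using lX by (metis Cons_nth_drop_Suc add_2_eq_Suc' append_Cons append_Nil less_add_Suc1
              add_Suc_right drop_drop lessI less_le_trans nat_add_left_cancel_less plus_1_eq_Suc add.commute)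
        ultimately show ?thesis by (simp add: Rs_def Rt_def)
      qed
      have "Rs \<in> SG s sb N \<and> Rt \<in> TG t tb N \<and> (X ! length s, X ! Suc (length s)) \<in> Mid p q c (last sb) (hd tb) N Rs Rt"
      proof -
        have "Rs @ [X ! length s, X ! Suc (length s)] @ Rt \<in> mrows (s @ [p,q] @ t) (sb @ [c] @ tb) N"
          by (subst XX[symmetric]) (fact X)
        then show ?thesis using mid_iff[OF L lR] by blast
      qed
      then have "(Rs, Rt, (X ! length s, X ! Suc (length s))) \<in> Z" by (simp add: Z_def)
      moreover have "h (Rs, Rt, (X ! length s, X ! Suc (length s))) = X" using XX by (simp add: h_def)
      ultimately show "X \<in> h ` Z" by (metis image_eqI)
    qed
  qed
  have "(\<Sum>Rs\<in>mrows (s @ [p,q] @ t) (sb @ [c] @ tb) N. wtr x Rs) = (\<Sum>z\<in>Z. wtr x (h z))"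
    using sum.reindex[OF inj, of "wtr x"] img by simp
  also have "\<dots> = (\<Sum>z\<in>Z. (\<lambda>(Rs, w). (\<lambda>(Rt, AB). wtr x Rs * (wtm x (fst AB) * wtm x (snd AB)) * wtr x Rt) w) z)"
    by (rule sum.cong) (auto simp: h_def wtr_app)
  also have "\<dots> = (\<Sum>Rs\<in>SG s sb N. \<Sum>w\<in>Sigma (TG t tb N) (Mid p q c (last sb) (hd tb) N Rs).
        (\<lambda>(Rt, AB). wtr x Rs * (wtm x (fst AB) * wtm x (snd AB)) * wtr x Rt) w)"
    unfolding Z_def by (rule sum.Sigma[symmetric]) (auto simp: fin_SG fin_TG fin_Mid)
  also have "\<dots> = (\<Sum>Rs\<in>SG s sb N. \<Sum>Rt\<in>TG t tb N. \<Sum>AB\<in>Mid p q c (last sb) (hd tb) N Rs Rt.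
        wtr x Rs * (wtm x (fst AB) * wtm x (snd AB)) * wtr x Rt)"
    by (rule sum.cong[OF refl], rule sum.Sigma[symmetric]) (auto simp: fin_TG fin_Mid)
  also have "\<dots> = (\<Sum>Rs\<in>SG s sb N. \<Sum>Rt\<in>TG t tb N. wtr x Rs * wtr x Rt *
        (\<Sum>AB\<in>Mid p q c (last sb) (hd tb) N Rs Rt. wtm x (fst AB) * wtm x (snd AB)))"
    by (simp add: sum_distrib_left mult_ac)
  finally show ?thesis .
qed



lemma mrows_cons_TG:
  assumes ne: "t \<noteq> []" and L: "length tb = length t"
  shows "R # Rs \<in> mrows t (tl tb) N \<longleftrightarrow> size R = hd t \<and> set_mset R \<subseteq> {1..N} \<and> Rs \<in> TG (tl t) (tl tb) N
     \<and> (Rs = [] \<or> adj (hd (tl tb)) R (hd Rs))"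
proof -
  obtain t1 t' where t: "t = t1 # t'" using ne by (cases t) auto
  obtain e0 bb where tb: "tb = e0 # bb" using L ne t by (cases tb) auto
  have lbb: "length bb = length t'" using L t tb by simp
  show ?thesis
  proof (cases "t' = []")
    case True
    then have "bb = []" using lbb by simp
    have "R # Rs \<in> mrows [t1] [] N \<longleftrightarrow> Rs = [] \<and> size R = t1 \<and> set_mset R \<subseteq> {1..N}"
      unfolding mrows_def by (cases Rs) auto
    moreover have "TG (tl t) (tl tb) N = {[]}" using t tb True \<open>bb = []\<close> by (simp add: TG_def)
    ultimately show ?thesis using t tb True \<open>bb = []\<close> by auto
  next
    case False
    then obtain e bb' where bb: "bb = e # bb'" using lbb by (cases bb) auto
    have lbb': "Suc (length bb') = length t'" using lbb bb by simp
    have A: "(\<forall>i<length (t1 # t'). size ((R # Rs)!i) = (t1 # t')!i \<and> set_mset ((R # Rs)!i) \<subseteq> {1..N})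
      \<longleftrightarrow> size R = t1 \<and> set_mset R \<subseteq> {1..N} \<and> (\<forall>i<length t'. size (Rs!i) = t'!i \<and> set_mset (Rs!i) \<subseteq> {1..N})"
      by (simp add: All_less_Suc2)
    have B: "(\<forall>i<length (e # bb'). adj ((e # bb')!i) ((R # Rs)!i) ((R # Rs)!(Suc i)))
      \<longleftrightarrow> adj e R (Rs!0) \<and> (\<forall>i<length bb'. adj (bb'!i) (Rs!i) (Rs!(Suc i)))"
      by (simp add: All_less_Suc2)
    have M1: "R # Rs \<in> mrows t (tl tb) N \<longleftrightarrow> length Rs = length t' \<and> (size R = t1 \<and> set_mset R \<subseteq> {1..N}
       \<and> (\<forall>i<length t'. size (Rs!i) = t'!i \<and> set_mset (Rs!i) \<subseteq> {1..N})) \<and>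
       (adj e R (Rs!0) \<and> (\<forall>i<length bb'. adj (bb'!i) (Rs!i) (Rs!(Suc i))))"
      unfolding mrows_def using t tb bb A B by simp
    have M2: "Rs \<in> TG (tl t) (tl tb) N \<longleftrightarrow> length Rs = length t' \<and>
       (\<forall>i<length t'. size (Rs!i) = t'!i \<and> set_mset (Rs!i) \<subseteq> {1..N}) \<and>
       (\<forall>i<length bb'. adj (bb'!i) (Rs!i) (Rs!(Suc i)))"
      using t tb bb False lbb' by (simp add: TG_def mrows_def)
    have hdR: "length Rs = length t' \<Longrightarrow> Rs \<noteq> [] \<and> hd Rs = Rs!0" using False by (cases Rs) auto
    have e1: "hd t = t1" "hd (tl tb) = e" using t tb bb by auto
    show ?thesis unfolding M1 M2 e1 using hdR by (intro iffI; elim conjE; intro conjI; simp)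
  qed
qed

lemma cnt_pos_ex': "1 \<le> cnt C y \<Longrightarrow> \<exists>c\<in>#C. c \<le> y"
proof -
  assume "1 \<le> cnt C y"
  moreover have "filter_mset (\<lambda>w. w \<le> y) C = {#} \<Longrightarrow> cnt C y = 0" by (simp add: cnt_def)
  ultimately have "filter_mset (\<lambda>w. w \<le> y) C \<noteq> {#}" by auto
  then obtain c where "c \<in># filter_mset (\<lambda>w. w \<le> y) C" by (meson multiset_nonemptyE)
  then show ?thesis by auto
qed

lemma above_full':
  assumes "\<forall>c\<in>#C. \<forall>z\<in>#T. z \<le> c" "1 \<le> cnt C y"
  shows "cnt T y = size T"
proof -
  obtain c where "c \<in># C" "c \<le> y" using cnt_pos_ex'[OF assms(2)] by blast
  then have "\<forall>z\<in>#T. z \<le> y" using assms(1) by fastforce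
  then show ?thesis by (rule cnt_full)
qed

lemma adj_plus_above:
  assumes "adj e T R" "\<forall>c\<in>#C. \<forall>z\<in>#T. z \<le> c"
  shows "adj e (T + C) R"
  unfolding adj_def
proof
  fix x
  have h: "cnt R (Suc x) + e \<le> cnt T x + size R" using assms(1) by (simp add: adj_def)
  then show "cnt R (Suc x) + e \<le> cnt (T + C) x + size R" by simp
qed

lemma adj_minus_above:
  assumes "adj e (T + C) R" "\<forall>c\<in>#C. \<forall>z\<in>#T. z \<le> c" "e \<le> size T"
  shows "adj e T R"
  unfolding adj_def
proof
  fix x
  have h: "cnt R (Suc x) + e \<le> cnt T x + cnt C x + size R" using assms(1) by (simp add: adj_def)
  show "cnt R (Suc x) + e \<le> cnt T x + size R"
  proof (cases "cnt C x = 0")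
    case True then show ?thesis using h by simp
  next
    case False
    then have "cnt T x = size T" using above_full'[of C T x] assms(2) by simp
    then show ?thesis using assms(3) cnt_le_size[of R "Suc x"] by simp
  qed
qed

lemma split_cnt:
  assumes "\<forall>c\<in>#C. \<forall>z\<in>#T. z \<le> c"
  shows "cnt T x = min (size T) (cnt (T + C) x)"
proof (cases "cnt C x = 0")
  case True then show ?thesis using cnt_le_size[of T x] by simp
next
  case False
  then have "cnt T x = size T" using above_full'[of C T x] assms by simp
  then show ?thesis by simp
qed

lemma split_uniq:
  fixes T C T' C' :: "nat multiset"
  assumes "T + C = T' + C'" "size T = size T'" "\<forall>c\<in>#C. \<forall>z\<in>#T. z \<le> c" "\<forall>c\<in>#C'. \<forall>z\<in>#T'. z \<le> c"
  shows "T = T' \<and> C = C'"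
proof -
  have "cnt T x = cnt T' x" for x
  proof -
    have a: "cnt T x = min (size T) (cnt (T + C) x)" by (rule split_cnt[OF assms(3)])
    have b: "cnt T' x = min (size T') (cnt (T' + C') x)" by (rule split_cnt[OF assms(4)])
    show ?thesis by (simp only: a b assms(1,2))
  qed
  then have "T = T'" by (rule mset_eq_cnt)
  then show ?thesis using assms(1) by (metis add_left_imp_eq)
qed


lemma wtm_plus: "wtm x (P + Q) = wtm x P * wtm x Q"
  by (simp add: wtm_def)

lemma sorted_split:
  fixes B :: "nat multiset"
  assumes "k \<le> size B"
  shows "mset (take k (sorted_list_of_multiset B)) + mset (drop k (sorted_list_of_multiset B)) = B"
    "size (mset (take k (sorted_list_of_multiset B))) = k"
    "size (mset (drop k (sorted_list_of_multiset B))) = size B - k"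
    "\<forall>c\<in>#mset (drop k (sorted_list_of_multiset B)). \<forall>z\<in>#mset (take k (sorted_list_of_multiset B)). z \<le> c"
    "set_mset (mset (take k (sorted_list_of_multiset B))) \<subseteq> set_mset B"
    "set_mset (mset (drop k (sorted_list_of_multiset B))) \<subseteq> set_mset B"
proof -
  let ?l = "sorted_list_of_multiset B"
  have len: "length ?l = size B" by (metis size_mset mset_sorted_list_of_multiset)
  show "mset (take k ?l) + mset (drop k ?l) = B" by (metis mset_append append_take_drop_id mset_sorted_list_of_multiset)
  show "size (mset (take k ?l)) = k" using len assms by simp
  show "size (mset (drop k ?l)) = size B - k" using len by simp
  have "sorted (take k ?l @ drop k ?l)" by simp
  then have "\<forall>z\<in>set (take k ?l). \<forall>c\<in>set (drop k ?l). z \<le> c" unfolding sorted_append by blast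
  then show "\<forall>c\<in>#mset (drop k ?l). \<forall>z\<in>#mset (take k ?l). z \<le> c" by auto
  show "set_mset (mset (take k ?l)) \<subseteq> set_mset B" by (metis in_set_takeD set_mset_mset set_sorted_list_of_multiset subsetI)
  show "set_mset (mset (drop k ?l)) \<subseteq> set_mset B" by (metis in_set_dropD set_mset_mset set_sorted_list_of_multiset subsetI)
qed

context core
begin

lemma G_conv:
  fixes x :: "nat \<Rightarrow> 'r::comm_ring_1" and t tb :: "nat list" and Rs :: "nat multiset list" and u :: "nat multiset"
  assumes ne: "t \<noteq> []" and L: "length tb = length t"
    and e2: "tl t \<noteq> [] \<Longrightarrow> hd (tl tb) \<le> hd t"
    and UC: "\<And>A. (Rs = [] \<or> adj e1 (last Rs) A) \<longleftrightarrow> adj 1 u A"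
  shows "(\<Sum>Rt'\<in>TG (tl t) (tl tb) N. wtr x Rt' *
      (\<Sum>AB\<in>Mid (n+1) (m - 1 + hd t) m e1 (hd (tl tb)) N Rs Rt'. wtm x (fst AB) * wtm x (snd AB)))
    = (\<Sum>Rt\<in>TG t tb N. wtr x Rt * (\<Sum>AC\<in>Gset (hd Rt) u. wtm x (fst AC) * wtm x (snd AC)))"
proof -
  let ?e = "hd (tl tb)"
  let ?M = "\<lambda>Rt'. Mid (n+1) (m - 1 + hd t) m e1 ?e N Rs Rt'"
  define X where "X = (SIGMA Rt':TG (tl t) (tl tb) N. ?M Rt')"
  define Y where "Y = (SIGMA Rt:TG t tb N. Gset (hd Rt) u)"
  define F where "F = (\<lambda>(Rt' :: nat multiset list, AB :: nat multiset \<times> nat multiset). wtr x Rt' * (wtm x (fst AB) * wtm x (snd AB)))"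
  define G where "G = (\<lambda>(Rt :: nat multiset list, AC :: nat multiset \<times> nat multiset). wtr x Rt * (wtm x (fst AC) * wtm x (snd AC)))"
  define g where "g = (\<lambda>(Rt :: nat multiset list, AC :: nat multiset \<times> nat multiset). (tl Rt, (fst AC, hd Rt + snd AC)))"
  have TGt: "TG t tb N = mrows t (tl tb) N" using ne by (simp add: TG_def)
  have ltb: "length (tl tb) + 1 = length t" using L ne by (cases t) auto
  have Yne: "Rt \<noteq> []" if "Rt \<in> TG t tb N" for Rt using that TGt ne by (auto simp: mrows_def)
  have TGcons: "T1 # Rt' \<in> TG t tb N \<longleftrightarrow> size T1 = hd t \<and> set_mset T1 \<subseteq> {1..N} \<and> Rt' \<in> TG (tl t) (tl tb) N
     \<and> (Rt' = [] \<or> adj ?e T1 (hd Rt'))" for T1 Rt'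
    unfolding TGt by (rule mrows_cons_TG[OF ne L])
  have Rt'len: "Rt' \<noteq> [] \<Longrightarrow> Rt' \<in> TG (tl t) (tl tb) N \<Longrightarrow> tl t \<noteq> []" for Rt'
    using TG_len by fastforce
  have finX: "finite X" unfolding X_def by (auto intro!: finite_SigmaI simp: fin_TG fin_Mid)
  have gY: "g ` Y \<subseteq> X"
  proof
    fix z assume "z \<in> g ` Y"
    then obtain Rt A C where y: "(Rt, (A, C)) \<in> Y" and z: "z = g (Rt, (A, C))" by auto
    have Rt: "Rt \<in> TG t tb N" and GA: "(A, C) \<in> Gset (hd Rt) u" using y by (auto simp: Y_def)
    obtain T1 Rt' where RR: "Rt = T1 # Rt'" using Yne[OF Rt] by (cases Rt) auto
    have c1: "size T1 = hd t" "set_mset T1 \<subseteq> {1..N}" "Rt' \<in> TG (tl t) (tl tb) N" "Rt' = [] \<or> adj ?e T1 (hd Rt')"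
      using Rt RR TGcons by auto
    have g1: "size A = n + 1" "size C = m - 1" "set_mset A \<subseteq> {1..N}" "set_mset C \<subseteq> {1..N}" "adj 1 u A"
      "\<forall>c\<in>#C. \<forall>z\<in>#T1. z \<le> c" "adj m A (T1 + C)"
      using GA RR by (auto simp: Gset_def)
    have "(A, T1 + C) \<in> ?M Rt'"
      using c1 g1 UC adj_plus_above[of ?e T1 "hd Rt'" C] by (auto simp: Mid_def)
    then show "z \<in> X" using z RR c1(3) by (simp add: g_def X_def)
  qed
  have ginj: "inj_on g Y"
  proof (rule inj_onI)
    fix y1 y2 assume y1: "y1 \<in> Y" and y2: "y2 \<in> Y" and e: "g y1 = g y2"
    obtain R1 A1 C1 where yy1: "y1 = (R1, (A1, C1))" by (cases y1) auto
    obtain R2 A2 C2 where yy2: "y2 = (R2, (A2, C2))" by (cases y2) auto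
    have R1: "R1 \<in> TG t tb N" "(A1, C1) \<in> Gset (hd R1) u" using y1 yy1 by (auto simp: Y_def)
    have R2: "R2 \<in> TG t tb N" "(A2, C2) \<in> Gset (hd R2) u" using y2 yy2 by (auto simp: Y_def)
    obtain T1 R1' where r1: "R1 = T1 # R1'" using Yne[OF R1(1)] by (cases R1) auto
    obtain T2 R2' where r2: "R2 = T2 # R2'" using Yne[OF R2(1)] by (cases R2) auto
    have s1: "size T1 = hd t" using R1 r1 TGcons by auto
    have s2: "size T2 = hd t" using R2 r2 TGcons by auto
    have a1: "\<forall>c\<in>#C1. \<forall>z\<in>#T1. z \<le> c" using R1 r1 by (simp add: Gset_def)
    have a2: "\<forall>c\<in>#C2. \<forall>z\<in>#T2. z \<le> c" using R2 r2 by (simp add: Gset_def)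
    have eq: "R1' = R2'" "A1 = A2" "T1 + C1 = T2 + C2" using e yy1 yy2 r1 r2 by (auto simp: g_def)
    have "T1 = T2 \<and> C1 = C2" using split_uniq[OF eq(3) _ a1 a2] s1 s2 by simp
    then show "y1 = y2" using eq yy1 yy2 r1 r2 by simp
  qed
  have gsurj: "X \<subseteq> g ` Y"
  proof
    fix z assume z: "z \<in> X"
    obtain Rt' A B where zz: "z = (Rt', (A, B))" by (cases z) auto
    have Rt': "Rt' \<in> TG (tl t) (tl tb) N" and AB: "(A, B) \<in> ?M Rt'" using z zz by (auto simp: X_def)
    have ab: "size A = n + 1" "size B = m - 1 + hd t" "set_mset A \<subseteq> {1..N}" "set_mset B \<subseteq> {1..N}"
      "adj m A B" "Rs = [] \<or> adj e1 (last Rs) A" "Rt' = [] \<or> adj ?e B (hd Rt')"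
      using AB by (auto simp: Mid_def)
    define T1 where "T1 = mset (take (hd t) (sorted_list_of_multiset B))"
    define C where "C = mset (drop (hd t) (sorted_list_of_multiset B))"
    have kk: "hd t \<le> size B" using ab(2) by simp
    note sp = sorted_split[OF kk, folded T1_def C_def]
    have sC: "size C = m - 1" using sp(3) ab(2) by simp
    have vT: "Rt' = [] \<or> adj ?e T1 (hd Rt')"
    proof (cases "Rt' = []")
      case False
      then have "tl t \<noteq> []" using Rt'len Rt' by blast
      then have "?e \<le> size T1" using e2 sp(2) by simp
      then show ?thesis using ab(7) False adj_minus_above[of ?e T1 C "hd Rt'"] sp(1,4) by simp
    qed simp
    have "T1 # Rt' \<in> TG t tb N" using TGcons sp(2,5) ab(4) Rt' vT by auto
    moreover have "(A, C) \<in> Gset T1 u" using ab sC sp(1,4,6) UC by (auto simp: Gset_def)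
    moreover have "g (T1 # Rt', (A, C)) = z" using zz sp(1) by (simp add: g_def)
    ultimately show "z \<in> g ` Y" unfolding Y_def by (metis (no_types, lifting) SigmaI image_eqI list.sel(1))
  qed
  have gimg: "g ` Y = X" using gY gsurj by blast
  have FG: "F (g y) = G y" if "y \<in> Y" for y
  proof -
    obtain Rt A C where yy: "y = (Rt, (A, C))" by (cases y) auto
    have "Rt \<noteq> []" using that yy Yne by (auto simp: Y_def)
    then obtain T1 Rt' where "Rt = T1 # Rt'" by (cases Rt) auto
    then show ?thesis using yy by (simp add: F_def G_def g_def wtm_plus wtr_def mult_ac)
  qed
  have "(\<Sum>Rt'\<in>TG (tl t) (tl tb) N. wtr x Rt' * (\<Sum>AB\<in>?M Rt'. wtm x (fst AB) * wtm x (snd AB)))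
      = (\<Sum>Rt'\<in>TG (tl t) (tl tb) N. \<Sum>AB\<in>?M Rt'. wtr x Rt' * (wtm x (fst AB) * wtm x (snd AB)))"
    by (simp add: sum_distrib_left)
  also have "\<dots> = (\<Sum>z\<in>X. F z)"
    unfolding X_def F_def by (rule sum.Sigma) (auto simp: fin_TG fin_Mid)
  also have "\<dots> = (\<Sum>y\<in>Y. F (g y))" using sum.reindex[OF ginj, of F] gimg by simp
  also have "\<dots> = (\<Sum>y\<in>Y. G y)" using FG by (rule sum.cong[OF refl])
  also have "\<dots> = (\<Sum>Rt\<in>TG t tb N. wtr x Rt * (\<Sum>AC\<in>Gset (hd Rt) u. wtm x (fst AC) * wtm x (snd AC)))"
  proof -
    have fG: "finite (Gset T u)" for T using fin_H G_sub_H by (rule finite_subset[rotated])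
    have "(\<Sum>y\<in>Y. G y) = (\<Sum>Rt\<in>TG t tb N. \<Sum>AC\<in>Gset (hd Rt) u. wtr x Rt * (wtm x (fst AC) * wtm x (snd AC)))"
      unfolding Y_def G_def by (rule sum.Sigma[symmetric]) (auto simp: fin_TG fG)
    then show ?thesis by (simp add: sum_distrib_left)
  qed
  finally show ?thesis .
qed

end



lemma valid_mid:
  assumes L: "length sb = length s" "length tb = length t"
    and h1: "\<forall>i. i + 1 < length s \<longrightarrow> sb!i \<le> min (s!i) (s!(i+1))"
    and h2: "s \<noteq> [] \<Longrightarrow> last sb \<le> min (last s) p"
    and h3: "c \<le> min p q"
    and h4: "t \<noteq> [] \<Longrightarrow> hd tb \<le> min q (hd t)"
    and h5: "\<forall>i. 0 < i \<and> i < length t \<longrightarrow> tb!i \<le> min (t!i) (t!(i-1))"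
  shows "ov_valid (s @ [p,q] @ t) (sb @ [c] @ tb)"
  unfolding ov_valid_def
proof (intro conjI allI impI)
  show "length (sb @ [c] @ tb) + 1 = length (s @ [p,q] @ t)" using L by simp
next
  fix i assume i: "i < length (sb @ [c] @ tb)"
  define k where "k = length s"
  have na: "(s @ p # q # t) ! i = (if i < k then s!i else if i = k then p else if i = Suc k then q else t ! (i - Suc (Suc k)))" for i
    using nth_mid[of s k p q t] k_def by simp
  have nb: "(sb @ c # tb) ! i = (if i < k then sb!i else if i = k then c else tb ! (i - Suc k))" for i
    using nth_mid1[of sb k c tb] L(1) k_def by simp
  have ik: "i < k + 1 + length t" using i L k_def by simp
  consider "Suc i < k" | "Suc i = k" | "i = k" | "i = Suc k" | "Suc (Suc k) \<le> i" by linarith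
  then show "(sb @ [c] @ tb) ! i \<le> min ((s @ [p,q] @ t) ! i) ((s @ [p,q] @ t) ! (i + 1))"
  proof cases
    case 1 then show ?thesis using h1 k_def by (simp add: na nb)
  next
    case 2
    have ne: "s \<noteq> []" "sb \<noteq> []" using 2 k_def L by auto
    have ii: "i = length s - 1" using 2 k_def by simp
    have "last s = s!i" "last sb = sb!i" using ii L ne by (auto simp: last_conv_nth)
    note ne this
    then show ?thesis using h2 2 by (simp add: na nb)
  next
    case 3 then show ?thesis using h3 by (simp add: na nb)
  next
    case 4
    then have "t \<noteq> []" using ik by auto
    moreover have "tb \<noteq> []" using L \<open>t \<noteq> []\<close> by auto
    ultimately have "hd t = t!0" "hd tb = tb!0" by (auto simp: hd_conv_nth)
    then show ?thesis using h4 4 \<open>t \<noteq> []\<close> by (simp add: na nb)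
  next
    case 5
    define j where "j = i - Suc k"
    have j: "0 < j" "j < length t" "i = j + Suc k" using 5 ik by (auto simp: j_def)
    have "tb!j \<le> min (t!j) (t!(j-1))" using h5 j by blast
    moreover have "i - Suc (Suc k) = j - 1" "Suc i - Suc (Suc k) = j" using j by auto
    ultimately show ?thesis using j by (simp add: na nb)
  qed
qed

lemma adj_trivial: "adj 1 {#0#} A"
  by (simp add: adj_def cnt_def)

lemma adj_trivial': "adj (Suc 0) {#0#} A"
  using adj_trivial by simp

lemma adj_mono_c: "adj c A B \<Longrightarrow> c' \<le> c \<Longrightarrow> adj c' A B"
  unfolding adj_def by (meson add_le_mono le_refl order_trans)


lemma adj1_empty_false:
  assumes "T \<noteq> {#}" "set_mset T \<subseteq> {1..N}"
  shows "\<not> adj 1 {#} T"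
proof
  assume "adj 1 {#} T"
  then have "cnt T (Suc N) + 1 \<le> cnt {#} N + size T" by (simp add: adj_def)
  moreover have "cnt T (Suc N) = size T" using cnt_ge_N[OF assms(2)] by simp
  ultimately show False by simp
qed

theorem corollary2p9:
  fixes \<sigma> \<sigma>b \<tau> \<tau>b :: "nat list" and m n N :: nat and x :: "nat \<Rightarrow> 'r::comm_ring_1"
  assumes "standing_hyp \<sigma> \<sigma>b \<tau> \<tau>b" and "0 < m" and "m \<le> n"
  shows "ov_schur (\<sigma> @ [m, n] @ \<tau>) (\<sigma>b @ [m - 1] @ \<tau>b) N x
           - ov_schur (\<sigma> @ [n + 1, m - 1] @ \<tau>) (\<sigma>b @ [m - 1] @ \<tau>b) N x
         = ov_schur (\<sigma> @ [m, n] @ \<tau>) (\<sigma>b @ [m] @ \<tau>b) N x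
           + (if \<tau> = [] then 0
              else ov_schur (\<sigma> @ [n + 1, m - 1 + hd \<tau>] @ tl \<tau>) (\<sigma>b @ [m] @ tl \<tau>b) N x)"
proof -
  interpret core m n N using assms(2,3) by unfold_locales
  have sh: "\<forall>k\<in>set \<sigma>. 1 \<le> k" "\<forall>k\<in>set \<tau>. 1 \<le> k" "length \<sigma>b = length \<sigma>" "length \<tau>b = length \<tau>"
    "\<sigma> \<noteq> [] \<Longrightarrow> last \<sigma>b = 1" "\<tau> \<noteq> [] \<Longrightarrow> hd \<tau>b = 1"
    "\<forall>i. i + 1 < length \<sigma> \<longrightarrow> \<sigma>b ! i \<le> min (\<sigma> ! i) (\<sigma> ! (i + 1))"
    "\<forall>i. 0 < i \<and> i < length \<tau> \<longrightarrow> \<tau>b ! i \<le> min (\<tau> ! i) (\<tau> ! (i - 1))"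
    using assms(1) unfolding standing_hyp_def by blast+
  have lastpos: "\<sigma> \<noteq> [] \<Longrightarrow> 1 \<le> last \<sigma>" using sh(1) by simp
  have hdpos: "\<tau> \<noteq> [] \<Longrightarrow> 1 \<le> hd \<tau>" using sh(2) by simp
  define SGs where "SGs = SG \<sigma> \<sigma>b N"
  define TGs where "TGs = TG \<tau> \<tau>b N"
  define W where "W = (\<lambda>p :: nat multiset \<times> nat multiset. wtm x (fst p) * wtm x (snd p))"
  define MS where "MS = (\<lambda>p q c Rs Rt. \<Sum>AB\<in>Mid p q c (last \<sigma>b) (hd \<tau>b) N Rs Rt. W AB)"
  define uS where "uS = (\<lambda>Rs :: nat multiset list. if Rs = [] then {#0#} else last Rs)"
  have rep: "ov_schur (\<sigma> @ [p,q] @ \<tau>) (\<sigma>b @ [c] @ \<tau>b) N x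
      = (\<Sum>Rs\<in>SGs. \<Sum>Rt\<in>TGs. wtr x Rs * wtr x Rt * MS p q c Rs Rt)"
    if v: "ov_valid (\<sigma> @ [p,q] @ \<tau>) (\<sigma>b @ [c] @ \<tau>b)" for p q c
  proof -
    have "ov_schur (\<sigma> @ [p,q] @ \<tau>) (\<sigma>b @ [c] @ \<tau>b) N x = (\<Sum>Rs\<in>mrows (\<sigma> @ [p,q] @ \<tau>) (\<sigma>b @ [c] @ \<tau>b) N. wtr x Rs)"
      using v ovl.skew_mrows[of "\<sigma> @ [p,q] @ \<tau>" "\<sigma>b @ [c] @ \<tau>b" N x] by (simp add: ov_schur_def ovl_def)
    also have "\<dots> = (\<Sum>Rs\<in>SGs. \<Sum>Rt\<in>TGs. wtr x Rs * wtr x Rt * MS p q c Rs Rt)"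
      unfolding SGs_def TGs_def MS_def W_def by (rule mid_sum[OF sh(3,4)])
    finally show ?thesis .
  qed
  have val: "ov_valid (\<sigma> @ [p,q] @ \<tau>) (\<sigma>b @ [c] @ \<tau>b)"
    if "1 \<le> p" "c \<le> min p q" "\<tau> \<noteq> [] \<Longrightarrow> 1 \<le> q" for p q c
    by (rule valid_mid[OF sh(3,4) sh(7) _ that(2) _ sh(8)]) (use sh(5,6) lastpos hdpos that in auto)
  have T1: "ov_schur (\<sigma> @ [m, n] @ \<tau>) (\<sigma>b @ [m - 1] @ \<tau>b) N x
      = (\<Sum>Rs\<in>SGs. \<Sum>Rt\<in>TGs. wtr x Rs * wtr x Rt * MS m n (m - 1) Rs Rt)"
    by (rule rep, rule val) (use assms in auto)
  have T3: "ov_schur (\<sigma> @ [m, n] @ \<tau>) (\<sigma>b @ [m] @ \<tau>b) N x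
      = (\<Sum>Rs\<in>SGs. \<Sum>Rt\<in>TGs. wtr x Rs * wtr x Rt * MS m n m Rs Rt)"
    by (rule rep, rule val) (use assms in auto)
  have TGne: "Rt \<noteq> [] \<and> hd Rt \<noteq> {#} \<and> set_mset (hd Rt) \<subseteq> {1..N}" if "\<tau> \<noteq> []" "Rt \<in> TGs" for Rt
  proof -
    have R: "Rt \<in> mrows \<tau> (tl \<tau>b) N" using that by (simp add: TGs_def TG_def)
    then have l: "length Rt = length \<tau>" by (simp add: mrows_def)
    then have ne: "Rt \<noteq> []" using that(1) by auto
    have "size (Rt!0) = \<tau>!0" "set_mset (Rt!0) \<subseteq> {1..N}" using R that(1) by (auto simp: mrows_def)
    moreover have "1 \<le> \<tau>!0" using sh(2) that(1) by (simp add: hd_conv_nth[symmetric])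
    ultimately show ?thesis using ne by (auto simp: hd_conv_nth)
  qed
  have T2: "ov_schur (\<sigma> @ [n + 1, m - 1] @ \<tau>) (\<sigma>b @ [m - 1] @ \<tau>b) N x
      = (\<Sum>Rs\<in>SGs. \<Sum>Rt\<in>TGs. wtr x Rs * wtr x Rt * MS (n + 1) (m - 1) (m - 1) Rs Rt)"
  proof (cases "m = 1 \<and> \<tau> \<noteq> []")
    case False
    show ?thesis by (rule rep, rule val) (use assms False in auto)
  next
    case True
    have nv: "\<not> ov_valid (\<sigma> @ [n + 1, m - 1] @ \<tau>) (\<sigma>b @ [m - 1] @ \<tau>b)"
    proof
      assume v: "ov_valid (\<sigma> @ [n + 1, m - 1] @ \<tau>) (\<sigma>b @ [m - 1] @ \<tau>b)"
      have "Suc (length \<sigma>) < length (\<sigma>b @ [m - 1] @ \<tau>b)" using True sh(3,4) by simp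
      then have "(\<sigma>b @ [m - 1] @ \<tau>b) ! Suc (length \<sigma>) \<le> min ((\<sigma> @ [n + 1, m - 1] @ \<tau>) ! Suc (length \<sigma>)) ((\<sigma> @ [n + 1, m - 1] @ \<tau>) ! (Suc (length \<sigma>) + 1))"
        using v by (simp add: ov_valid_def)
      moreover have "(\<sigma>b @ [m - 1] @ \<tau>b) ! Suc (length \<sigma>) = hd \<tau>b"
        using sh(3,4) True by (cases \<tau>b) (auto simp: nth_append)
      moreover have "(\<sigma> @ [n + 1, m - 1] @ \<tau>) ! Suc (length \<sigma>) = 0" using True by (simp add: nth_append)
      ultimately show False using sh(6) True by simp
    qed
    have "MS (n + 1) (m - 1) (m - 1) Rs Rt = 0" if "Rt \<in> TGs" for Rs Rt
    proof -
      have "Mid (n + 1) (m - 1) (m - 1) (last \<sigma>b) (hd \<tau>b) N Rs Rt = {}"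
        using TGne[OF _ that] True sh(6) adj1_empty_false[of "hd Rt" N] by (auto simp: Mid_def)
      then show ?thesis by (simp add: MS_def)
    qed
    then show ?thesis using nv by (simp add: ov_schur_def)
  qed
  have key: "MS m n (m - 1) Rs Rt - MS (n + 1) (m - 1) (m - 1) Rs Rt - MS m n m Rs Rt
      = (if Rt = [] then 0 else (\<Sum>AC\<in>Gset (hd Rt) (uS Rs). W AC))"
    if Rs: "Rs \<in> SGs" and Rt: "Rt \<in> TGs" for Rs Rt
  proof -
    let ?u = "uS Rs"
    have UC: "(Rs = [] \<or> adj (last \<sigma>b) (last Rs) A) \<longleftrightarrow> adj 1 ?u A" for A
    proof (cases "Rs = []")
      case True then show ?thesis by (simp add: uS_def adj_trivial adj_trivial')
    next
      case False
      then have "\<sigma> \<noteq> []" using SG_len[of Rs \<sigma> \<sigma>b N] Rs by (auto simp: SGs_def)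
      then show ?thesis using False sh(5) by (simp add: uS_def)
    qed
    define V where "V = (\<lambda>B. Rt = [] \<or> adj 1 B (hd Rt))"
    have VC: "(Rt = [] \<or> adj (hd \<tau>b) B (hd Rt)) \<longleftrightarrow> V B" for B
    proof (cases "Rt = []")
      case True then show ?thesis by (simp add: V_def)
    next
      case False
      then have "\<tau> \<noteq> []" using TG_len[of Rt \<tau> \<tau>b N] Rt by (auto simp: TGs_def)
      then show ?thesis using False sh(6) by (simp add: V_def)
    qed
    have Mid_eq: "Mid p q c (last \<sigma>b) (hd \<tau>b) N Rs Rt = {(A,B). size A = p \<and> size B = q \<and> set_mset A \<subseteq> {1..N}
        \<and> set_mset B \<subseteq> {1..N} \<and> adj c A B \<and> adj 1 ?u A \<and> V B}" for p q c
      unfolding Mid_def using UC VC by blast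
    let ?S = "{p \<in> Sset m n N ?u. V (snd p)}"
    let ?H = "{p \<in> Hset m n N ?u. V (snd p)}"
    have M1: "Mid m n (m - 1) (last \<sigma>b) (hd \<tau>b) N Rs Rt = Mid m n m (last \<sigma>b) (hd \<tau>b) N Rs Rt \<union> ?S"
      unfolding Mid_eq by (auto simp: Sset_def intro: adj_mono_c)
    have D1: "Mid m n m (last \<sigma>b) (hd \<tau>b) N Rs Rt \<inter> ?S = {}"
      unfolding Mid_eq by (auto simp: Sset_def)
    have M2: "Mid (n + 1) (m - 1) (m - 1) (last \<sigma>b) (hd \<tau>b) N Rs Rt = ?H"
      unfolding Mid_eq by (auto simp: Hset_def)
    have finS: "finite ?S"
      using fin_Mid[of m n "m - 1" "last \<sigma>b" "hd \<tau>b" N Rs Rt] M1 by (metis finite_Un)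
    have "MS m n (m - 1) Rs Rt = MS m n m Rs Rt + (\<Sum>p\<in>?S. W p)"
      unfolding MS_def M1 by (rule sum.union_disjoint[OF fin_Mid finS D1])
    moreover have "MS (n + 1) (m - 1) (m - 1) Rs Rt = (\<Sum>p\<in>?H. W p)" unfolding MS_def M2 ..
    moreover have Wf: "W p = wtm x (fst p + snd p)" for p by (simp add: W_def wtm_plus)
    moreover have "(\<Sum>p\<in>?S. W p) = (\<Sum>p\<in>?H. W p) + (if Rt = [] then 0 else (\<Sum>AC\<in>Gset (hd Rt) ?u. W AC))"
    proof (cases "Rt = []")
      case True
      then show ?thesis using sum_R1[where u="?u" and f="wtm x"] by (simp add: V_def Wf)
    next
      case False
      then have "\<tau> \<noteq> []" using TG_len[of Rt \<tau> \<tau>b N] Rt by (auto simp: TGs_def)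
      then have T: "hd Rt \<noteq> {#}" "set_mset (hd Rt) \<subseteq> {1..N}" using TGne Rt by auto
      show ?thesis using sum_R2[OF T, where u="?u" and f="wtm x"] False by (simp add: V_def Wf)
    qed
    ultimately show ?thesis by (simp add: algebra_simps)
  qed
  have diff: "ov_schur (\<sigma> @ [m, n] @ \<tau>) (\<sigma>b @ [m - 1] @ \<tau>b) N x
           - ov_schur (\<sigma> @ [n + 1, m - 1] @ \<tau>) (\<sigma>b @ [m - 1] @ \<tau>b) N x
           - ov_schur (\<sigma> @ [m, n] @ \<tau>) (\<sigma>b @ [m] @ \<tau>b) N x
      = (\<Sum>Rs\<in>SGs. \<Sum>Rt\<in>TGs. wtr x Rs * wtr x Rt * (if Rt = [] then 0 else (\<Sum>AC\<in>Gset (hd Rt) (uS Rs). W AC)))"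
  proof -
    have "(\<Sum>Rs\<in>SGs. \<Sum>Rt\<in>TGs. wtr x Rs * wtr x Rt * MS m n (m - 1) Rs Rt)
        - (\<Sum>Rs\<in>SGs. \<Sum>Rt\<in>TGs. wtr x Rs * wtr x Rt * MS (n + 1) (m - 1) (m - 1) Rs Rt)
        - (\<Sum>Rs\<in>SGs. \<Sum>Rt\<in>TGs. wtr x Rs * wtr x Rt * MS m n m Rs Rt)
      = (\<Sum>Rs\<in>SGs. \<Sum>Rt\<in>TGs. wtr x Rs * wtr x Rt *
          (MS m n (m - 1) Rs Rt - MS (n + 1) (m - 1) (m - 1) Rs Rt - MS m n m Rs Rt))"
      by (simp add: sum_subtractf sum.distrib algebra_simps)
    also have "\<dots> = (\<Sum>Rs\<in>SGs. \<Sum>Rt\<in>TGs. wtr x Rs * wtr x Rt * (if Rt = [] then 0 else (\<Sum>AC\<in>Gset (hd Rt) (uS Rs). W AC)))"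
      using key by (intro sum.cong refl) simp
    finally show ?thesis using T1 T2 T3 by simp
  qed
  show ?thesis
  proof (cases "\<tau> = []")
    case True
    then have "TGs = {[]}" by (simp add: TGs_def TG_def)
    then show ?thesis using diff True by (simp add: algebra_simps)
  next
    case False
    have v4: "ov_valid (\<sigma> @ [n + 1, m - 1 + hd \<tau>] @ tl \<tau>) (\<sigma>b @ [m] @ tl \<tau>b)"
    proof (rule valid_mid)
      show "length (tl \<tau>b) = length (tl \<tau>)" using sh(4) by simp
      show "\<forall>i. 0 < i \<and> i < length (tl \<tau>) \<longrightarrow> tl \<tau>b ! i \<le> min (tl \<tau> ! i) (tl \<tau> ! (i - 1))"
      proof (intro allI impI)
        fix i assume i: "0 < i \<and> i < length (tl \<tau>)"
        then have "Suc i < length \<tau>" by (simp add: less_diff_conv)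
        then have "\<tau>b ! Suc i \<le> min (\<tau> ! Suc i) (\<tau> ! i)" using sh(8)[rule_format, of "Suc i"] by simp
        moreover have "tl \<tau> ! (i - 1) = \<tau> ! i" "tl \<tau> ! i = \<tau> ! Suc i" "tl \<tau>b ! i = \<tau>b ! Suc i"
        proof -
          obtain t0 ts where t: "\<tau> = t0 # ts" using False by (cases \<tau>) auto
          obtain b0 bs where b: "\<tau>b = b0 # bs" using False sh(4) by (cases \<tau>b) auto
          show "tl \<tau> ! (i - 1) = \<tau> ! i" using i t by (simp add: nth_Cons')
          show "tl \<tau> ! i = \<tau> ! Suc i" using t by simp
          show "tl \<tau>b ! i = \<tau>b ! Suc i" using b by simp
        qed
        ultimately show "tl \<tau>b ! i \<le> min (tl \<tau> ! i) (tl \<tau> ! (i - 1))" by simp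
      qed
      show "tl \<tau> \<noteq> [] \<Longrightarrow> hd (tl \<tau>b) \<le> min (m - 1 + hd \<tau>) (hd (tl \<tau>))"
      proof -
        assume ne: "tl \<tau> \<noteq> []"
        then have "1 < length \<tau>" by (cases \<tau>) auto
        then have "\<tau>b ! 1 \<le> min (\<tau> ! 1) (\<tau> ! 0)" using sh(8) by auto
        moreover have "hd (tl \<tau>b) = \<tau>b ! 1 \<and> hd (tl \<tau>) = \<tau> ! 1 \<and> hd \<tau> = \<tau> ! 0"
        proof -
          obtain t0 t1 ts where t: "\<tau> = t0 # t1 # ts" using \<open>1 < length \<tau>\<close> by (cases \<tau>; cases "tl \<tau>") auto
          obtain b0 b1 bs where b: "\<tau>b = b0 # b1 # bs" using \<open>1 < length \<tau>\<close> sh(4) by (cases \<tau>b; cases "tl \<tau>b") auto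
          show ?thesis using t b by simp
        qed
        ultimately show ?thesis by simp
      qed
      show "length \<sigma>b = length \<sigma>" by (rule sh(3))
      show "\<forall>i. i + 1 < length \<sigma> \<longrightarrow> \<sigma>b ! i \<le> min (\<sigma> ! i) (\<sigma> ! (i + 1))" by (rule sh(7))
      show "\<sigma> \<noteq> [] \<Longrightarrow> last \<sigma>b \<le> min (last \<sigma>) (n + 1)" using sh(5) lastpos by simp
      show "m \<le> min (n + 1) (m - 1 + hd \<tau>)" using hdpos False assms(3) by simp
    qed
    have e2: "tl \<tau> \<noteq> [] \<Longrightarrow> hd (tl \<tau>b) \<le> hd \<tau>"
    proof -
      assume ne: "tl \<tau> \<noteq> []"
      then have "1 < length \<tau>" by (cases \<tau>) auto
      then have "\<tau>b ! 1 \<le> min (\<tau> ! 1) (\<tau> ! 0)" using sh(8) by auto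
      moreover have "hd (tl \<tau>b) = \<tau>b ! 1 \<and> hd \<tau> = \<tau> ! 0"
      proof -
        obtain t0 t1 ts where t: "\<tau> = t0 # t1 # ts" using \<open>1 < length \<tau>\<close> by (cases \<tau>; cases "tl \<tau>") auto
        obtain b0 b1 bs where b: "\<tau>b = b0 # b1 # bs" using \<open>1 < length \<tau>\<close> sh(4) by (cases \<tau>b; cases "tl \<tau>b") auto
        show ?thesis using t b by simp
      qed
      ultimately show ?thesis by simp
    qed
    have T4: "ov_schur (\<sigma> @ [n + 1, m - 1 + hd \<tau>] @ tl \<tau>) (\<sigma>b @ [m] @ tl \<tau>b) N x
       = (\<Sum>Rs\<in>SGs. wtr x Rs * (\<Sum>Rt\<in>TGs. wtr x Rt * (\<Sum>AC\<in>Gset (hd Rt) (uS Rs). W AC)))"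
    proof -
      have "ov_schur (\<sigma> @ [n + 1, m - 1 + hd \<tau>] @ tl \<tau>) (\<sigma>b @ [m] @ tl \<tau>b) N x
          = (\<Sum>Rs\<in>mrows (\<sigma> @ [n + 1, m - 1 + hd \<tau>] @ tl \<tau>) (\<sigma>b @ [m] @ tl \<tau>b) N. wtr x Rs)"
        using v4 ovl.skew_mrows[of "\<sigma> @ [n + 1, m - 1 + hd \<tau>] @ tl \<tau>" "\<sigma>b @ [m] @ tl \<tau>b" N x]
        by (simp add: ov_schur_def ovl_def)
      also have "\<dots> = (\<Sum>Rs\<in>SGs. \<Sum>Rt'\<in>TG (tl \<tau>) (tl \<tau>b) N. wtr x Rs * wtr x Rt' *
          (\<Sum>AB\<in>Mid (n + 1) (m - 1 + hd \<tau>) m (last \<sigma>b) (hd (tl \<tau>b)) N Rs Rt'. W AB))"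
        unfolding SGs_def W_def by (rule mid_sum) (use sh(3,4) in simp_all)
      also have "\<dots> = (\<Sum>Rs\<in>SGs. wtr x Rs * (\<Sum>Rt'\<in>TG (tl \<tau>) (tl \<tau>b) N. wtr x Rt' *
          (\<Sum>AB\<in>Mid (n + 1) (m - 1 + hd \<tau>) m (last \<sigma>b) (hd (tl \<tau>b)) N Rs Rt'. W AB)))"
        by (simp add: sum_distrib_left mult_ac)
      also have "\<dots> = (\<Sum>Rs\<in>SGs. wtr x Rs * (\<Sum>Rt\<in>TGs. wtr x Rt * (\<Sum>AC\<in>Gset (hd Rt) (uS Rs). W AC)))"
      proof (rule sum.cong[OF refl])
        fix Rs assume Rs: "Rs \<in> SGs"
        have UC: "(Rs = [] \<or> adj (last \<sigma>b) (last Rs) A) \<longleftrightarrow> adj 1 (uS Rs) A" for A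
        proof (cases "Rs = []")
          case True then show ?thesis by (simp add: uS_def adj_trivial adj_trivial')
        next
          case False
          then have "\<sigma> \<noteq> []" using SG_len[of Rs \<sigma> \<sigma>b N] Rs by (auto simp: SGs_def)
          then show ?thesis using False sh(5) by (simp add: uS_def)
        qed
        have "(\<Sum>Rt'\<in>TG (tl \<tau>) (tl \<tau>b) N. wtr x Rt' *
          (\<Sum>AB\<in>Mid (n + 1) (m - 1 + hd \<tau>) m (last \<sigma>b) (hd (tl \<tau>b)) N Rs Rt'. W AB))
          = (\<Sum>Rt\<in>TGs. wtr x Rt * (\<Sum>AC\<in>Gset (hd Rt) (uS Rs). W AC))"
          unfolding TGs_def W_def by (rule G_conv[OF False sh(4) e2 UC])
        then show "wtr x Rs * (\<Sum>Rt'\<in>TG (tl \<tau>) (tl \<tau>b) N. wtr x Rt' *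
          (\<Sum>AB\<in>Mid (n + 1) (m - 1 + hd \<tau>) m (last \<sigma>b) (hd (tl \<tau>b)) N Rs Rt'. W AB))
          = wtr x Rs * (\<Sum>Rt\<in>TGs. wtr x Rt * (\<Sum>AC\<in>Gset (hd Rt) (uS Rs). W AC))" by simp
      qed
      finally show ?thesis .
    qed
    have ne: "Rt \<noteq> []" if "Rt \<in> TGs" for Rt using TGne[OF False that] by simp
    have "(\<Sum>Rs\<in>SGs. \<Sum>Rt\<in>TGs. wtr x Rs * wtr x Rt * (if Rt = [] then 0 else (\<Sum>AC\<in>Gset (hd Rt) (uS Rs). W AC)))
        = (\<Sum>Rs\<in>SGs. \<Sum>Rt\<in>TGs. wtr x Rs * (wtr x Rt * (\<Sum>AC\<in>Gset (hd Rt) (uS Rs). W AC)))"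
      by (intro sum.cong refl) (simp add: ne)
    also have "\<dots> = (\<Sum>Rs\<in>SGs. wtr x Rs * (\<Sum>Rt\<in>TGs. wtr x Rt * (\<Sum>AC\<in>Gset (hd Rt) (uS Rs). W AC)))"
      by (simp only: sum_distrib_left)
    finally have eqf: "(\<Sum>Rs\<in>SGs. \<Sum>Rt\<in>TGs. wtr x Rs * wtr x Rt * (if Rt = [] then 0 else (\<Sum>AC\<in>Gset (hd Rt) (uS Rs). W AC)))
        = (\<Sum>Rs\<in>SGs. wtr x Rs * (\<Sum>Rt\<in>TGs. wtr x Rt * (\<Sum>AC\<in>Gset (hd Rt) (uS Rs). W AC)))" .
    show ?thesis using diff T4 False eqf by (simp add: algebra_simps)
  qed
qed


end
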